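(* Let $(V,* )$ be a graded magmatic algebra, i.e. $V=\bigoplus_{n\ge0}V_n$ with each $V_n$ finite-dimensional and $V_n*V_m\subseteq V_{n+m}$, and assume $V_0=(0)$. Then $(T(V),\cdot,1,\Delta,\varepsilon,* )$, where $\cdot$ is concatenation, $\Delta$ the coproduct making elements of $V$ primitive, and $*$ the extension described below, is a cocommutative, connected, graded right Post-Hopf algebra for the grading of $T(V)$ by total degree of words.
   Context: Extension (known fact): $*$ extends uniquely to $T(V)\otimes T(V)\to T(V)$ such that for all $f,g,h\in T(V)$, $y\in V$ (Sweedler notation $\Delta(h)=h^{(1)}\otimes h^{(2)}$): $\varepsilon(f*g)=\varepsilon(f)\varepsilon(g)$; $\Delta(f*g)=\Delta(f)*\Delta(g)$; $f*1=f$; $1*f=\varepsilon(f)1$; $f*(gy)=(f*g)*y-f*(g*y)$; $(fg)*h=(f*h^{(1)})(g*h^{(2)})$; $(f*g)*h=f*\big((g*h^{(1)})h^{(2)}\big)$. A right Post-Hopf algebra is a Hopf algebra with a coalgebra morphism $\rhd:H\otimes H\to H$ such that $(x\cdot y)\rhd z=(x\rhd z^{(1)})\cdot(y\rhd z^{(2)})$, $(x\rhd y)\rhd z=x\rhd\big((y\rhd z^{(1)})\cdot z^{(2)}\big)$, and $\gamma_\rhd(x)(y)=y\rhd x$ is invertible in the convolution algebra $\mathrm{Hom}(H,\mathrm{End}(H))$ with product $(f\star g)(x)=f(x^{(1)})\circ g(x^{(2)})$. Graded: $H=\bigoplus H_n$ with finite-dimensional pieces, graded bialgebra, $H_n\rhd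 H_m\subseteq H_{n+m}$; connected: $\dim H_0=1$. The degree of a word of homogeneous letters is the sum of their degrees. *)

theory Defs
  imports Main
begin

text \<open>A vector with coordinates in a field, with respect to a basis indexed by
  type 'a, is a function 'a => 'k with finite support.\<close>

definition spt :: "('a \<Rightarrow> 'k::zero) \<Rightarrow> 'a set" where
  "spt f = {x. f x \<noteq> 0}"

definition fin :: "('a \<Rightarrow> 'k::zero) \<Rightarrow> bool" where
  "fin f \<longleftrightarrow> finite (spt f)"

definition lext :: "('a \<Rightarrow> 'c \<Rightarrow> 'k::comm_ring_1) \<Rightarrow> ('a \<Rightarrow> 'k) \<Rightarrow> 'c \<Rightarrow> 'k" where
  "lext h f = (\<lambda>z. \<Sum>a\<in>spt f. f a * h a z)"

definition dl :: "'a \<Rightarrow> 'a \<Rightarrow> 'k::{zero,one}" where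
  "dl a = (\<lambda>x. if x = a then 1 else 0)"

definition tens :: "('a \<Rightarrow> 'k::times) \<Rightarrow> ('c \<Rightarrow> 'k) \<Rightarrow> ('a \<times> 'c \<Rightarrow> 'k)" where
  "tens f g = (\<lambda>(x, y). f x * g y)"

text \<open>V has a homogeneous basis indexed by 'b; T(V) has the basis of words
  ('b list); T(V) tensor T(V) has the basis of pairs of words.\<close>

definition tv_mult :: "('b list \<Rightarrow> 'k::field) \<Rightarrow> ('b list \<Rightarrow> 'k) \<Rightarrow> 'b list \<Rightarrow> 'k" where
  "tv_mult f g = lext (\<lambda>(u, v). dl (u @ v)) (tens f g)"

definition tv_unit :: "'b list \<Rightarrow> 'k::field" where
  "tv_unit = dl []"

text \<open>Deshuffle coproduct (letters primitive): coefficient of u (x) v in Delta(w).\<close>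
definition tv_cop_w :: "'b list \<Rightarrow> 'b list \<times> 'b list \<Rightarrow> 'k::field" where
  "tv_cop_w w = (\<lambda>(u, v). of_nat (card {S. S \<subseteq> {..<length w} \<and> nths w S = u
                                   \<and> nths w ({..<length w} - S) = v}))"

definition tv_cop :: "('b list \<Rightarrow> 'k::field) \<Rightarrow> 'b list \<times> 'b list \<Rightarrow> 'k" where
  "tv_cop f = lext tv_cop_w f"

definition tv_eps :: "('b list \<Rightarrow> 'k::field) \<Rightarrow> 'k" where
  "tv_eps f = f []"

definition tv_mult2 :: "('b list \<times> 'b list \<Rightarrow> 'k::field) \<Rightarrow> ('b list \<times> 'b list \<Rightarrow> 'k)
    \<Rightarrow> 'b list \<times> 'b list \<Rightarrow> 'k" where
  "tv_mult2 F G = lext (\<lambda>((a, b), (c, d)). dl (a @ c, b @ d)) (tens F G)"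

text \<open>m x y is the coordinate vector of x * y for basis elements x, y of V.
  tv_wl m u y is the word u acted on by the letter y:
  (x1...xn) * y = sum_i x1...(xi*y)...xn  (from (fg)*h = (f*h1)(g*h2) and f*1 = f).\<close>
definition tv_wl :: "('b \<Rightarrow> 'b \<Rightarrow> 'b \<Rightarrow> 'k::field) \<Rightarrow> 'b list \<Rightarrow> 'b \<Rightarrow> 'b list \<Rightarrow> 'k" where
  "tv_wl m u y = (\<lambda>w. \<Sum>i<length u.
      if length w = length u \<and> take i w = take i u \<and> drop (Suc i) w = drop (Suc i) u
      then m (u ! i) y (w ! i) else 0)"

text \<open>u * w for words, by recursion on the length n of w, using
  f * 1 = f and f * (g y) = (f * g) * y - f * (g * y).\<close>
primrec tv_W :: "('b \<Rightarrow> 'b \<Rightarrow> 'b \<Rightarrow> 'k::field) \<Rightarrow> nat \<Rightarrow> 'b list \<Rightarrow> 'b list \<Rightarrow> 'b list \<Rightarrow> 'k" where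
  "tv_W m 0 u w = dl u"
| "tv_W m (Suc n) u w =
     (if w = [] then dl u
      else (\<lambda>z. lext (\<lambda>v. tv_wl m v (last w)) (tv_W m n u (butlast w)) z
              - lext (\<lambda>v. tv_W m n u v) (tv_wl m (butlast w) (last w)) z))"

definition tv_wstar :: "('b \<Rightarrow> 'b \<Rightarrow> 'b \<Rightarrow> 'k::field) \<Rightarrow> 'b list \<Rightarrow> 'b list \<Rightarrow> 'b list \<Rightarrow> 'k" where
  "tv_wstar m u w = tv_W m (length w) u w"

definition tv_star :: "('b \<Rightarrow> 'b \<Rightarrow> 'b \<Rightarrow> 'k::field) \<Rightarrow> ('b list \<Rightarrow> 'k) \<Rightarrow> ('b list \<Rightarrow> 'k)
    \<Rightarrow> 'b list \<Rightarrow> 'k" where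
  "tv_star m f g = lext (\<lambda>(u, w). tv_wstar m u w) (tens f g)"

definition tv_star2 :: "('b \<Rightarrow> 'b \<Rightarrow> 'b \<Rightarrow> 'k::field) \<Rightarrow> ('b list \<times> 'b list \<Rightarrow> 'k)
    \<Rightarrow> ('b list \<times> 'b list \<Rightarrow> 'k) \<Rightarrow> 'b list \<times> 'b list \<Rightarrow> 'k" where
  "tv_star2 m F G = lext (\<lambda>((a, b), (c, d)). tens (tv_wstar m a c) (tv_wstar m b d)) (tens F G)"

definition tv_hopf :: "'b itself \<Rightarrow> 'k::field itself \<Rightarrow> bool" where
  "tv_hopf B K \<longleftrightarrow>
    (\<forall>f g :: 'b list \<Rightarrow> 'k. fin f \<and> fin g \<longrightarrow> fin (tv_mult f g) \<and> fin (tv_cop f)) \<and>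
    (\<forall>f g h :: 'b list \<Rightarrow> 'k. fin f \<and> fin g \<and> fin h \<longrightarrow>
        tv_mult (tv_mult f g) h = tv_mult f (tv_mult g h)) \<and>
    (\<forall>f :: 'b list \<Rightarrow> 'k. fin f \<longrightarrow> tv_mult tv_unit f = f \<and> tv_mult f tv_unit = f) \<and>
    (\<forall>f :: 'b list \<Rightarrow> 'k. fin f \<longrightarrow>
        lext (\<lambda>(a, b). tens (tv_cop_w a) (dl b)) (tv_cop f)
        = lext (\<lambda>(a, b). lext (\<lambda>(c, d). dl ((a, c), d)) (tv_cop_w b)) (tv_cop f)) \<and>
    (\<forall>f :: 'b list \<Rightarrow> 'k. fin f \<longrightarrow>
        lext (\<lambda>(a, b). (\<lambda>x. tv_eps (dl a :: 'b list \<Rightarrow> 'k) * dl b x)) (tv_cop f) = f \<and>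
        lext (\<lambda>(a, b). (\<lambda>x. dl a x * tv_eps (dl b :: 'b list \<Rightarrow> 'k))) (tv_cop f) = f) \<and>
    (\<forall>f g :: 'b list \<Rightarrow> 'k. fin f \<and> fin g \<longrightarrow>
        tv_cop (tv_mult f g) = tv_mult2 (tv_cop f) (tv_cop g) \<and>
        tv_eps (tv_mult f g) = tv_eps f * tv_eps g) \<and>
    tv_cop (tv_unit :: 'b list \<Rightarrow> 'k) = dl ([], []) \<and>
    tv_eps (tv_unit :: 'b list \<Rightarrow> 'k) = 1 \<and>
    (\<exists>s :: 'b list \<Rightarrow> 'b list \<Rightarrow> 'k. (\<forall>w. fin (s w)) \<and>
        (\<forall>f. fin f \<longrightarrow>
          lext (\<lambda>(a, b). tv_mult (s a) (dl b)) (tv_cop f) = (\<lambda>x. tv_eps f * tv_unit x) \<and>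
          lext (\<lambda>(a, b). tv_mult (dl a) (s b)) (tv_cop f) = (\<lambda>x. tv_eps f * tv_unit x)))"

text \<open>Right Post-Hopf algebra (T(V), concatenation, 1, Delta, eps, star).
  The convolution inverse beta of gamma is an element of Hom(H, End H),
  given by its values bt w v = beta(w)(v) on basis words.\<close>
definition tv_right_post_hopf :: "('b \<Rightarrow> 'b \<Rightarrow> 'b \<Rightarrow> 'k::field) \<Rightarrow> bool" where
  "tv_right_post_hopf m \<longleftrightarrow>
    tv_hopf TYPE('b) TYPE('k) \<and>
    (\<forall>f g. fin f \<and> fin g \<longrightarrow>
        fin (tv_star m f g) \<and>
        tv_cop (tv_star m f g) = tv_star2 m (tv_cop f) (tv_cop g) \<and>
        tv_eps (tv_star m f g) = tv_eps f * tv_eps g) \<and>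
    (\<forall>f g h. fin f \<and> fin g \<and> fin h \<longrightarrow>
        tv_star m (tv_mult f g) h
        = lext (\<lambda>(a, b). tv_mult (tv_star m f (dl a)) (tv_star m g (dl b))) (tv_cop h)) \<and>
    (\<forall>f g h. fin f \<and> fin g \<and> fin h \<longrightarrow>
        tv_star m (tv_star m f g) h
        = tv_star m f (lext (\<lambda>(a, b). tv_mult (tv_star m g (dl a)) (dl b)) (tv_cop h))) \<and>
    (\<exists>bt :: 'b list \<Rightarrow> 'b list \<Rightarrow> 'b list \<Rightarrow> 'k. (\<forall>w v. fin (bt w v)) \<and>
        (\<forall>x y. fin x \<and> fin y \<longrightarrow>
          lext (\<lambda>(a, b). tv_star m (lext (bt b) y) (dl a)) (tv_cop x) = (\<lambda>z. tv_eps x * y z) \<and>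
          lext (\<lambda>(a, b). lext (bt a) (tv_star m y (dl b))) (tv_cop x) = (\<lambda>z. tv_eps x * y z)))"

definition tv_cocommutative :: "'b itself \<Rightarrow> 'k::field itself \<Rightarrow> bool" where
  "tv_cocommutative B K \<longleftrightarrow>
    (\<forall>f :: 'b list \<Rightarrow> 'k. fin f \<longrightarrow> (\<forall>u v. tv_cop f (u, v) = tv_cop f (v, u)))"

definition wdeg :: "('b \<Rightarrow> nat) \<Rightarrow> 'b list \<Rightarrow> nat" where
  "wdeg deg w = sum_list (map deg w)"

definition tv_grade :: "('b \<Rightarrow> nat) \<Rightarrow> nat \<Rightarrow> ('b list \<Rightarrow> 'k::field) set" where
  "tv_grade deg n = {f. fin f \<and> (\<forall>w. f w \<noteq> 0 \<longrightarrow> wdeg deg w = n)}"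

definition tv_connected_graded :: "('b \<Rightarrow> nat) \<Rightarrow> ('b \<Rightarrow> 'b \<Rightarrow> 'b \<Rightarrow> 'k::field) \<Rightarrow> bool" where
  "tv_connected_graded deg m \<longleftrightarrow>
    (\<forall>n. finite {w. wdeg deg w = n}) \<and>
    (\<forall>f g n k. f \<in> tv_grade deg n \<and> g \<in> tv_grade deg k \<longrightarrow>
        tv_mult f g \<in> tv_grade deg (n + k) \<and> tv_star m f g \<in> tv_grade deg (n + k)) \<and>
    (tv_unit :: 'b list \<Rightarrow> 'k) \<in> tv_grade deg 0 \<and>
    (\<forall>(f :: 'b list \<Rightarrow> 'k) n. f \<in> tv_grade deg n \<longrightarrow>
        (\<forall>u v. tv_cop f (u, v) \<noteq> 0 \<longrightarrow> wdeg deg u + wdeg deg v = n) \<and>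
        (n \<noteq> 0 \<longrightarrow> tv_eps f = 0)) \<and>
    (\<forall>f :: 'b list \<Rightarrow> 'k. f \<in> tv_grade deg 0 \<longrightarrow> f = (\<lambda>x. f [] * tv_unit x))"

end

theory Submission
  imports Defs "HOL-Library.Function_Algebras"
begin


definition sc :: "'k::field \<Rightarrow> ('c \<Rightarrow> 'k) \<Rightarrow> 'c \<Rightarrow> 'k" where
  "sc c f = (\<lambda>z. c * f z)"

lemma sum_fun_apply: "(\<Sum>a\<in>A. g a) z = (\<Sum>a\<in>A. g a z)"
  by (induction A rule: infinite_finite_induct) auto

lemma sc_apply[simp]: "sc c f z = c * f z" by (simp add: sc_def)

lemma fin_zero[simp]: "fin (0::'a\<Rightarrow>'k::zero)" by (simp add: fin_def spt_def)
lemma fin_dl[simp]: "fin (dl a :: 'a \<Rightarrow> 'k::zero_neq_one)"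
proof -
  have "spt (dl a :: 'a \<Rightarrow> 'k) \<subseteq> {a}" by (auto simp: spt_def dl_def)
  thus ?thesis by (simp add: fin_def finite_subset)
qed
lemma spt_dl: "spt (dl a :: 'a \<Rightarrow> 'k::zero_neq_one) = {a}"
  by (auto simp: spt_def dl_def)

lemma fin_subset: "fin f \<Longrightarrow> spt g \<subseteq> spt f \<Longrightarrow> fin g"
  by (auto simp: fin_def intro: finite_subset)

lemma fin_add[simp]: "fin f \<Longrightarrow> fin g \<Longrightarrow> fin (f + (g::'a\<Rightarrow>'k::comm_monoid_add))"
proof -
  assume "fin f" "fin g"
  have "spt (f+g) \<subseteq> spt f \<union> spt g" by (auto simp: spt_def)
  thus ?thesis using \<open>fin f\<close> \<open>fin g\<close> by (auto simp: fin_def intro: finite_subset)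
qed
lemma fin_uminus[simp]: "fin (- (f::'a\<Rightarrow>'k::ab_group_add)) = fin f"
  by (simp add: fin_def spt_def)
lemma fin_diff[simp]: "fin f \<Longrightarrow> fin g \<Longrightarrow> fin (f - (g::'a\<Rightarrow>'k::ab_group_add))"
proof -
  assume "fin f" "fin g"
  have "spt (f-g) \<subseteq> spt f \<union> spt g" by (auto simp: spt_def)
  thus ?thesis using \<open>fin f\<close> \<open>fin g\<close> by (auto simp: fin_def intro: finite_subset)
qed
lemma fin_sc[simp]: "fin f \<Longrightarrow> fin (sc c (f::'a\<Rightarrow>'k::field))"
  by (erule fin_subset) (auto simp: spt_def)
lemma fin_sum[simp]: "(\<And>a. a \<in> A \<Longrightarrow> fin (g a)) \<Longrightarrow> fin (\<Sum>a\<in>A. (g a::'c\<Rightarrow>'k::field))"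
  by (induction A rule: infinite_finite_induct) auto

lemma lext_eq_sum:
  assumes "finite A" "spt f \<subseteq> A"
  shows "lext h f = (\<Sum>a\<in>A. sc (f a) (h a))"
proof
  fix z
  have "lext h f z = (\<Sum>a\<in>spt f. f a * h a z)" by (simp add: lext_def)
  also have "\<dots> = (\<Sum>a\<in>A. f a * h a z)"
    by (rule sum.mono_neutral_left) (use assms in \<open>auto simp: spt_def\<close>)
  finally show "lext h f z = (\<Sum>a\<in>A. sc (f a) (h a)) z" by (simp add: sum_fun_apply)
qed

lemma lext_spt: "fin f \<Longrightarrow> lext h f = (\<Sum>a\<in>spt f. sc (f a) (h a))"
  by (rule lext_eq_sum) (auto simp: fin_def)

lemma fin_lext[simp]: "fin f \<Longrightarrow> (\<And>a. fin (h a)) \<Longrightarrow> fin (lext h (f::'a\<Rightarrow>'k::field))"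
  by (simp add: lext_spt)

lemma lext_cong: "(\<And>a. a \<in> spt f \<Longrightarrow> h a = h' a) \<Longrightarrow> lext h f = lext h' f"
  by (simp add: lext_def)

lemma lext_dl[simp]: "lext h (dl a :: 'a \<Rightarrow> 'k::field) = h a"
  by (rule ext) (simp only: lext_def spt_dl, simp add: dl_def)

lemma lext_zero[simp]: "lext h 0 = 0"
  by (rule ext) (simp add: lext_def spt_def)

lemma lext_zero_fun[simp]: "lext (\<lambda>a. 0) f = 0"
  by (rule ext) (simp add: lext_def)

lemma lext_eq_sum_pt:
  fixes f :: "'a \<Rightarrow> 'k::field"
  assumes "finite A" "spt f \<subseteq> A"
  shows "lext h f z = (\<Sum>a\<in>A. f a * h a z)"
  using lext_eq_sum[OF assms, of h] by (simp add: sum_fun_apply)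

lemma lext_add: "fin f \<Longrightarrow> fin g \<Longrightarrow> lext h (f + g) = lext h f + lext h (g::'a\<Rightarrow>'k::field)"
proof (rule ext)
  fix z assume a: "fin f" "fin g"
  let ?A = "spt f \<union> spt g"
  have fA: "finite ?A" using a by (auto simp: fin_def)
  have s: "spt f \<subseteq> ?A" "spt g \<subseteq> ?A" "spt (f+g) \<subseteq> ?A" by (auto simp: spt_def)
  show "lext h (f + g) z = (lext h f + lext h g) z"
    by (simp add: lext_eq_sum_pt[OF fA s(1)] lext_eq_sum_pt[OF fA s(2)] lext_eq_sum_pt[OF fA s(3)]
        sum.distrib[symmetric] distrib_right)
qed

lemma lext_sc: "lext h (sc c f) = sc c (lext h (f::'a\<Rightarrow>'k::field))"
proof (cases "c = 0")
  case True thus ?thesis by (simp add: sc_def lext_def spt_def)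
next
  case False
  hence "spt (sc c f) = spt f" by (auto simp: spt_def)
  thus ?thesis by (auto simp: lext_def sum_distrib_left mult.assoc)
qed

lemma lext_uminus: "lext h (- f) = - lext h (f::'a\<Rightarrow>'k::field)"
  using lext_sc[of h "-1" f] by (simp add: sc_def fun_Compl_def)

lemma lext_diff: "fin f \<Longrightarrow> fin g \<Longrightarrow> lext h (f - g) = lext h f - lext h (g::'a\<Rightarrow>'k::field)"
  using lext_add[of f "-g" h] by (simp add: lext_uminus)

lemma lext_hadd: "lext (\<lambda>a. h1 a + h2 a) f = lext h1 f + lext h2 f"
  by (rule ext) (simp add: lext_def sum.distrib distrib_left)
lemma lext_hdiff: "lext (\<lambda>a. h1 a - h2 a) f = lext h1 f - lext h2 f"
  by (rule ext) (simp add: lext_def sum_subtractf right_diff_distrib)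
lemma lext_hsc: "lext (\<lambda>a. sc c (h a)) f = sc c (lext h f)"
  by (rule ext) (simp add: lext_def sum_distrib_left mult.left_commute)
lemma lext_hsum: "lext (\<lambda>a. \<Sum>i\<in>I. h i a) f = (\<Sum>i\<in>I. lext (h i) f)"
proof (rule ext)
  fix z
  have "lext (\<lambda>a. \<Sum>i\<in>I. h i a) f z = (\<Sum>a\<in>spt f. \<Sum>i\<in>I. f a * h i a z)"
    by (simp add: lext_def sum_fun_apply sum_distrib_left)
  also have "\<dots> = (\<Sum>i\<in>I. \<Sum>a\<in>spt f. f a * h i a z)" by (rule sum.swap)
  finally show "lext (\<lambda>a. \<Sum>i\<in>I. h i a) f z = (\<Sum>i\<in>I. lext (h i) f) z"
    by (simp add: lext_def sum_fun_apply)
qed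

lemma lext_sum: "(\<And>i. i \<in> I \<Longrightarrow> fin (g i)) \<Longrightarrow> lext h (\<Sum>i\<in>I. g i) = (\<Sum>i\<in>I. lext h (g i :: 'a \<Rightarrow> 'k::field))"
  by (induction I rule: infinite_finite_induct) (auto simp: lext_add)

lemma lext_comp:
  fixes f :: "'a \<Rightarrow> 'k::field"
  assumes "fin f" "\<And>a. fin (g a)"
  shows "lext h (lext g f) = lext (\<lambda>a. lext h (g a)) f"
proof -
  have "lext h (lext g f) = lext h (\<Sum>a\<in>spt f. sc (f a) (g a))" by (simp add: lext_spt assms)
  also have "\<dots> = (\<Sum>a\<in>spt f. lext h (sc (f a) (g a)))"
    by (rule lext_sum) (simp add: assms)
  also have "\<dots> = (\<Sum>a\<in>spt f. sc (f a) (lext h (g a)))"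
    by (simp only: lext_sc)
  also have "\<dots> = lext (\<lambda>a. lext h (g a)) f" by (simp add: lext_spt assms)
  finally show ?thesis .
qed

lemma lext_dl_id: "fin f \<Longrightarrow> lext dl f = (f :: 'a \<Rightarrow> 'k::field)"
proof (rule ext)
  fix z assume "fin f"
  have "lext dl f z = (\<Sum>a\<in>spt f. f a * dl a z)" by (simp add: lext_def)
  also have "\<dots> = (\<Sum>a\<in>spt f. if a = z then f a else 0)"
    by (rule sum.cong) (auto simp: dl_def)
  also have "\<dots> = f z" using \<open>fin f\<close> by (auto simp: fin_def spt_def)
  finally show "lext dl f z = f z" .
qed

lemma lext_swap:
  fixes f :: "'a \<Rightarrow> 'k::field" and g :: "'b \<Rightarrow> 'k"
  assumes "fin f" "fin g"
  shows "lext (\<lambda>u. lext (\<lambda>v. H u v) g) f = lext (\<lambda>v. lext (\<lambda>u. H u v) f) g"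
proof (rule ext)
  fix z
  show "lext (\<lambda>u. lext (\<lambda>v. H u v) g) f z = lext (\<lambda>v. lext (\<lambda>u. H u v) f) g z"
  proof -
    have "lext (\<lambda>u. lext (\<lambda>v. H u v) g) f z = (\<Sum>u\<in>spt f. \<Sum>v\<in>spt g. f u * (g v * H u v z))"
      by (simp add: lext_def sum_distrib_left)
    also have "\<dots> = (\<Sum>v\<in>spt g. \<Sum>u\<in>spt f. f u * (g v * H u v z))" by (rule sum.swap)
    also have "\<dots> = lext (\<lambda>v. lext (\<lambda>u. H u v) f) g z"
      by (simp add: lext_def sum_distrib_left mult.left_commute)
    finally show ?thesis .
  qed
qed

lemma spt_tens: "spt (tens f g) = spt f \<times> spt (g :: 'b \<Rightarrow> 'k::field)"
  by (auto simp: spt_def tens_def)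
lemma fin_tens[simp]: "fin f \<Longrightarrow> fin g \<Longrightarrow> fin (tens f (g :: 'b \<Rightarrow> 'k::field))"
  by (simp add: fin_def spt_tens)

lemma lext_tens:
  fixes f :: "'a \<Rightarrow> 'k::field" and g :: "'b \<Rightarrow> 'k"
  assumes "fin f" "fin g"
  shows "lext h (tens f g) = lext (\<lambda>u. lext (\<lambda>v. h (u,v)) g) f"
proof (rule ext)
  fix z
  show "lext h (tens f g) z = lext (\<lambda>u. lext (\<lambda>v. h (u,v)) g) f z"
  proof -
    have "lext h (tens f g) z = (\<Sum>p\<in>spt f \<times> spt g. tens f g p * h p z)"
      by (simp only: lext_def spt_tens)
    also have "\<dots> = (\<Sum>u\<in>spt f. \<Sum>v\<in>spt g. f u * (g v * h (u,v) z))"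
      by (simp add: sum.cartesian_product tens_def mult.assoc split_def)
    also have "\<dots> = lext (\<lambda>u. lext (\<lambda>v. h (u,v)) g) f z"
      by (simp add: lext_def sum_distrib_left)
    finally show ?thesis .
  qed
qed

definition lin :: "(('a \<Rightarrow> 'k::field) \<Rightarrow> ('c \<Rightarrow> 'k)) \<Rightarrow> bool" where
  "lin L \<longleftrightarrow> (\<forall>f. fin f \<longrightarrow> L f = lext (\<lambda>a. L (dl a)) f)"

lemma linD: "lin L \<Longrightarrow> fin f \<Longrightarrow> L f = lext (\<lambda>a. L (dl a)) f"
  unfolding lin_def by blast

lemma lin_lext[simp]: "lin (\<lambda>f. lext h f)"
  unfolding lin_def lext_dl by simp

lemma lin_eq:
  assumes "lin L1" "lin L2" "fin f" "\<And>a. a \<in> spt f \<Longrightarrow> L1 (dl a) = L2 (dl a)"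
  shows "L1 f = L2 f"
  unfolding linD[OF assms(1,3)] linD[OF assms(2,3)] by (rule lext_cong) (rule assms(4))

lemma lin_fin: "lin L \<Longrightarrow> fin f \<Longrightarrow> (\<And>a. fin (L (dl a))) \<Longrightarrow> fin (L f)"
proof -
  assume a: "lin L" "fin f" "\<And>a. fin (L (dl a))"
  have "L f = lext (\<lambda>a. L (dl a)) f" by (rule linD[OF a(1,2)])
  thus ?thesis using a(2,3) by simp
qed

lemma lin_comp:
  fixes L2 :: "('a \<Rightarrow> 'k::field) \<Rightarrow> ('b \<Rightarrow> 'k)" and L1 :: "('b \<Rightarrow> 'k) \<Rightarrow> ('c \<Rightarrow> 'k)"
  assumes "lin L1" "lin L2" "\<And>a. fin (L2 (dl a))"
  shows "lin (\<lambda>f. L1 (L2 f))"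
  unfolding lin_def
proof (intro allI impI)
  fix f :: "'a \<Rightarrow> 'k" assume f: "fin f"
  have e2: "L2 f = lext (\<lambda>a. L2 (dl a)) f" by (rule linD[OF assms(2) f])
  have "L1 (L2 f) = lext (\<lambda>b. L1 (dl b)) (L2 f)"
    by (rule linD[OF assms(1)]) (rule lin_fin[OF assms(2) f assms(3)])
  also have "\<dots> = lext (\<lambda>b. L1 (dl b)) (lext (\<lambda>a. L2 (dl a)) f)" by (simp only: e2)
  also have "\<dots> = lext (\<lambda>a. lext (\<lambda>b. L1 (dl b)) (L2 (dl a))) f"
    by (rule lext_comp[OF f assms(3)])
  also have "\<dots> = lext (\<lambda>a. L1 (L2 (dl a))) f"
    by (rule lext_cong) (rule sym, rule linD[OF assms(1) assms(3)])
  finally show "L1 (L2 f) = lext (\<lambda>a. L1 (L2 (dl a))) f" .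
qed

lemma lin_add:
  fixes L1 L2 :: "('a \<Rightarrow> 'k::field) \<Rightarrow> ('c \<Rightarrow> 'k)"
  assumes "lin L1" "lin L2" shows "lin (\<lambda>f. L1 f + L2 f)"
  unfolding lin_def
proof (intro allI impI)
  fix f :: "'a \<Rightarrow> 'k" assume f: "fin f"
  show "L1 f + L2 f = lext (\<lambda>a. L1 (dl a) + L2 (dl a)) f"
    by (simp only: lext_hadd linD[OF assms(1) f] linD[OF assms(2) f])
qed
lemma lin_diff:
  fixes L1 L2 :: "('a \<Rightarrow> 'k::field) \<Rightarrow> ('c \<Rightarrow> 'k)"
  assumes "lin L1" "lin L2" shows "lin (\<lambda>f. L1 f - L2 f)"
  unfolding lin_def
proof (intro allI impI)
  fix f :: "'a \<Rightarrow> 'k" assume f: "fin f"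
  show "L1 f - L2 f = lext (\<lambda>a. L1 (dl a) - L2 (dl a)) f"
    by (simp only: lext_hdiff linD[OF assms(1) f] linD[OF assms(2) f])
qed
lemma lin_sc:
  fixes L1 :: "('a \<Rightarrow> 'k::field) \<Rightarrow> ('c \<Rightarrow> 'k)"
  assumes "lin L1" shows "lin (\<lambda>f. sc c (L1 f))"
  unfolding lin_def
proof (intro allI impI)
  fix f :: "'a \<Rightarrow> 'k" assume f: "fin f"
  show "sc c (L1 f) = lext (\<lambda>a. sc c (L1 (dl a))) f"
    by (simp only: lext_hsc linD[OF assms(1) f])
qed
lemma lin_sum:
  fixes L :: "'i \<Rightarrow> ('a \<Rightarrow> 'k::field) \<Rightarrow> ('c \<Rightarrow> 'k)"
  assumes l: "\<And>i. i \<in> I \<Longrightarrow> lin (L i)"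
  shows "lin (\<lambda>f. \<Sum>i\<in>I. L i f)"
  unfolding lin_def
proof (intro allI impI)
  fix f :: "'a \<Rightarrow> 'k" assume f: "fin f"
  have "(\<Sum>i\<in>I. L i f) = (\<Sum>i\<in>I. lext (\<lambda>a. L i (dl a)) f)"
    by (rule sum.cong) (simp_all only: linD[OF l f])
  thus "(\<Sum>i\<in>I. L i f) = lext (\<lambda>a. \<Sum>i\<in>I. L i (dl a)) f" by (simp only: lext_hsum)
qed
lemma lin_zero: "lin (\<lambda>f. 0)"
  by (simp add: lin_def)
lemma lin_id: "lin (\<lambda>f. f)"
  by (simp add: lin_def lext_dl_id)

lemma lin_addD: "lin L \<Longrightarrow> fin f \<Longrightarrow> fin g \<Longrightarrow> L (f + g) = L f + L g"
  by (simp add: linD[of L "f+g"] linD[of L f] linD[of L g] lext_add)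
lemma lin_diffD: "lin L \<Longrightarrow> fin f \<Longrightarrow> fin g \<Longrightarrow> L (f - g) = L f - L g"
  by (simp add: linD[of L "f-g"] linD[of L f] linD[of L g] lext_diff)
lemma lin_scD: "lin L \<Longrightarrow> fin f \<Longrightarrow> L (sc c f) = sc c (L f)"
  by (simp add: linD[of L "sc c f"] linD[of L f] lext_sc)
lemma lin_zeroD: "lin L \<Longrightarrow> L 0 = 0"
  by (simp add: linD[of L 0])
lemma lin_sumD: "lin L \<Longrightarrow> (\<And>i. i \<in> I \<Longrightarrow> fin (g i)) \<Longrightarrow> L (\<Sum>i\<in>I. g i) = (\<Sum>i\<in>I. L (g i))"
  by (simp add: linD[of L "sum g I"] linD[of L "g _"] lext_sum)



lemma nths_snoc: "nths (w @ [x]) A = nths w A @ (if length w \<in> A then [x] else [])"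
  by (simp add: nths_append)

lemma nths_cong: "(\<And>i. i < length w \<Longrightarrow> i \<in> A \<longleftrightarrow> i \<in> B) \<Longrightarrow> nths w A = nths w B"
proof (induction w rule: rev_induct)
  case Nil thus ?case by simp
next
  case (snoc x w)
  have "nths w A = nths w B" by (rule snoc.IH) (use snoc.prems in auto)
  moreover have "length w \<in> A \<longleftrightarrow> length w \<in> B" using snoc.prems by simp
  ultimately show ?case by (simp add: nths_snoc)
qed

definition dsum :: "('b list \<Rightarrow> 'b list \<Rightarrow> 'c \<Rightarrow> 'k::field) \<Rightarrow> 'b list \<Rightarrow> 'c \<Rightarrow> 'k" where
  "dsum G w = (\<Sum>S\<in>Pow {..<length w}. G (nths w S) (nths w ({..<length w} - S)))"

lemma dsum_nil[simp]: "dsum G [] = G [] []"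
  by (simp add: dsum_def)

lemma Pow_lessThan_Suc: "Pow {..<Suc n} = Pow {..<n} \<union> insert n ` Pow {..<n}"
  by (simp add: lessThan_Suc Pow_insert)

lemma dsum_snoc:
  "dsum G (w @ [y]) = dsum (\<lambda>a b. G (a @ [y]) b) w + dsum (\<lambda>a b. G a (b @ [y])) w"
proof -
  let ?n = "length w"
  let ?P = "Pow {..<?n}"
  have fin: "finite ?P" by simp
  have disj: "?P \<inter> insert ?n ` ?P = {}" by auto
  have inj: "inj_on (insert ?n) ?P"
    by (rule inj_onI) (metis Pow_iff insert_ident lessThan_iff less_irrefl subsetD)
  have "dsum G (w @ [y]) = (\<Sum>S\<in>?P \<union> insert ?n ` ?P. G (nths (w@[y]) S) (nths (w@[y]) ({..<Suc ?n} - S)))"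
    by (simp add: dsum_def Pow_lessThan_Suc)
  also have "\<dots> = (\<Sum>S\<in>?P. G (nths (w@[y]) S) (nths (w@[y]) ({..<Suc ?n} - S)))
      + (\<Sum>S\<in>insert ?n ` ?P. G (nths (w@[y]) S) (nths (w@[y]) ({..<Suc ?n} - S)))"
    by (rule sum.union_disjoint) (use disj in auto)
  also have "(\<Sum>S\<in>?P. G (nths (w@[y]) S) (nths (w@[y]) ({..<Suc ?n} - S)))
       = dsum (\<lambda>a b. G a (b @ [y])) w"
    unfolding dsum_def
  proof (rule sum.cong)
    fix S assume S: "S \<in> ?P"
    have "nths w ({..<Suc ?n} - S) = nths w ({..<?n} - S)" by (rule nths_cong) auto
    thus "G (nths (w@[y]) S) (nths (w@[y]) ({..<Suc ?n} - S)) = G (nths w S) (nths w ({..<?n} - S) @ [y])"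
      using S by (auto simp: nths_snoc)
  qed simp
  also have "(\<Sum>S\<in>insert ?n ` ?P. G (nths (w@[y]) S) (nths (w@[y]) ({..<Suc ?n} - S)))
       = (\<Sum>S\<in>?P. G (nths (w@[y]) (insert ?n S)) (nths (w@[y]) ({..<Suc ?n} - insert ?n S)))"
    by (rule sum.reindex_cong[OF inj refl]) simp
  also have "\<dots> = dsum (\<lambda>a b. G (a @ [y]) b) w"
    unfolding dsum_def
  proof (rule sum.cong)
    fix S assume S: "S \<in> ?P"
    have "nths w (insert ?n S) = nths w S" by (rule nths_cong) auto
    moreover have "nths w ({..<Suc ?n} - insert ?n S) = nths w ({..<?n} - S)" by (rule nths_cong) auto
    ultimately show "G (nths (w@[y]) (insert ?n S)) (nths (w@[y]) ({..<Suc ?n} - insert ?n S))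
        = G (nths w S @ [y]) (nths w ({..<?n} - S))"
      using S by (auto simp: nths_snoc)
  qed simp
  finally show ?thesis by (rule trans) (rule add.commute)
qed

lemma dsum_add: "dsum (\<lambda>a b. G a b + H a b) w = dsum G w + dsum H w"
  by (simp add: dsum_def sum.distrib)
lemma dsum_diff: "dsum (\<lambda>a b. G a b - H a b) w = dsum G w - dsum H w"
  by (simp add: dsum_def sum_subtractf)
lemma dsum_zero[simp]: "dsum (\<lambda>a b. 0) w = 0"
  by (simp add: dsum_def)
lemma sc_sum: "sc c (\<Sum>i\<in>I. g i) = (\<Sum>i\<in>I. sc c (g i))"
  by (rule ext) (simp add: sum_fun_apply sum_distrib_left)
lemma sc_sum_left: "sc (\<Sum>i\<in>I. c i) g = (\<Sum>i\<in>I. sc (c i) g)"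
  by (rule ext) (simp add: sum_fun_apply sum_distrib_right)
lemma sc_one[simp]: "sc 1 f = f" by (simp add: sc_def)
lemma sc_zero[simp]: "sc 0 f = 0" by (simp add: sc_def fun_eq_iff)
lemma dsum_sc: "dsum (\<lambda>a b. sc c (G a b)) w = sc c (dsum G w)"
  by (simp add: dsum_def sc_sum)
lemma dsum_sum: "dsum (\<lambda>a b. \<Sum>i\<in>I. G i a b) w = (\<Sum>i\<in>I. dsum (G i) w)"
  unfolding dsum_def by (rule sum.swap)
lemma fin_dsum[simp]: "(\<And>a b. fin (G a b)) \<Longrightarrow> fin (dsum G w)"
  by (simp add: dsum_def)
lemma lin_dsum: "lin L \<Longrightarrow> (\<And>a b. fin (G a b)) \<Longrightarrow> L (dsum G w) = dsum (\<lambda>a b. L (G a b)) w"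
  unfolding dsum_def by (rule lin_sumD) auto
lemma lext_dsum: "(\<And>a b. fin (G a b)) \<Longrightarrow> lext h (dsum G w) = dsum (\<lambda>a b. lext h (G a b)) w"
  by (rule lin_dsum[OF lin_lext])
lemma dsum_apply: "dsum G w z = dsum (\<lambda>a b. (\<lambda>_::unit. G a b z)) w ()"
  by (simp add: dsum_def sum_fun_apply)

lemma dsum_cong: "(\<And>a b. G a b = H a b) \<Longrightarrow> dsum G w = dsum H w"
  by (simp add: dsum_def)

lemma tv_cop_w_eq:
  "tv_cop_w w p = of_nat (card {S \<in> Pow {..<length w}. (nths w S, nths w ({..<length w} - S)) = p})"
  by (cases p) (simp add: tv_cop_w_def conj_commute)

lemma spt_cop_w:
  "spt (tv_cop_w w :: _ \<Rightarrow> 'k::field) \<subseteq> (\<lambda>S. (nths w S, nths w ({..<length w} - S))) ` Pow {..<length w}"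
proof
  fix p assume "p \<in> spt (tv_cop_w w :: _ \<Rightarrow> 'k)"
  hence "(of_nat (card {S \<in> Pow {..<length w}. (nths w S, nths w ({..<length w} - S)) = p}) :: 'k) \<noteq> 0"
    by (simp add: spt_def tv_cop_w_eq)
  hence "card {S \<in> Pow {..<length w}. (nths w S, nths w ({..<length w} - S)) = p} \<noteq> 0"
    by (metis of_nat_0)
  hence "{S \<in> Pow {..<length w}. (nths w S, nths w ({..<length w} - S)) = p} \<noteq> {}"
    by (metis card.empty)
  thus "p \<in> (\<lambda>S. (nths w S, nths w ({..<length w} - S))) ` Pow {..<length w}" by blast
qed

lemma fin_cop_w[simp]: "fin (tv_cop_w w :: _ \<Rightarrow> 'k::field)"
  unfolding fin_def by (rule finite_subset[OF spt_cop_w]) simp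

lemma lext_cop_w: "lext h (tv_cop_w w :: _ \<Rightarrow> 'k::field) = dsum (\<lambda>a b. h (a, b)) w"
proof -
  let ?P = "\<lambda>S. (nths w S, nths w ({..<length w} - S))"
  let ?A = "Pow {..<length w}"
  let ?X = "\<lambda>p. {S \<in> ?A. ?P S = p}"
  have "lext h (tv_cop_w w :: _ \<Rightarrow> 'k) = (\<Sum>p\<in>?P ` ?A. sc (tv_cop_w w p) (h p))"
    by (rule lext_eq_sum[OF _ spt_cop_w]) simp
  also have "\<dots> = (\<Sum>p\<in>?P ` ?A. \<Sum>S\<in>?X p. h p)"
  proof (rule sum.cong)
    fix p
    have "sc (tv_cop_w w p :: 'k) (h p) = sc (\<Sum>S\<in>?X p. 1) (h p)"
      by (simp add: tv_cop_w_eq)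
    also have "\<dots> = (\<Sum>S\<in>?X p. h p)" by (simp only: sc_sum_left sc_one)
    finally show "sc (tv_cop_w w p :: 'k) (h p) = (\<Sum>S\<in>?X p. h p)" .
  qed simp
  also have "\<dots> = (\<Sum>p\<in>?P ` ?A. \<Sum>S\<in>?X p. h (?P S))"
    by (rule sum.cong[OF refl], rule sum.cong) auto
  also have "\<dots> = (\<Sum>S\<in>?A. h (?P S))"
    by (rule sum.group) auto
  finally show ?thesis by (simp add: dsum_def)
qed

lemma cop_w_dsum: "(tv_cop_w w :: _ \<Rightarrow> 'k::field) = dsum (\<lambda>a b. dl (a, b)) w"
  using lext_cop_w[of dl w] by (simp add: lext_dl_id)

lemma dsum_counit1: "dsum (\<lambda>a b. if a = [] then G b else 0) w = G w"
proof (induction w arbitrary: G rule: rev_induct)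
  case Nil thus ?case by simp
next
  case (snoc y w)
  show ?case
    by (simp add: dsum_snoc snoc.IH[of "\<lambda>b. G (b @ [y])"])
qed

lemma dsum_counit2: "dsum (\<lambda>a b. if b = [] then G a else 0) w = G w"
proof (induction w arbitrary: G rule: rev_induct)
  case Nil thus ?case by simp
next
  case (snoc y w)
  show ?case
    by (simp add: dsum_snoc snoc.IH[of "\<lambda>b. G (b @ [y])"])
qed

lemma dsum_comm: "dsum G w = dsum (\<lambda>a b. G b a) w"
proof (induction w arbitrary: G rule: rev_induct)
  case Nil thus ?case by simp
next
  case (snoc y w)
  have "dsum G (w @ [y]) = dsum (\<lambda>a b. G (a @ [y]) b) w + dsum (\<lambda>a b. G a (b @ [y])) w"
    by (rule dsum_snoc)
  also have "\<dots> = dsum (\<lambda>a b. G (b @ [y]) a) w + dsum (\<lambda>a b. G b (a @ [y])) w"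
    using snoc.IH[of "\<lambda>a b. G (a @ [y]) b"] snoc.IH[of "\<lambda>a b. G a (b @ [y])"] by simp
  also have "\<dots> = dsum (\<lambda>a b. G b a) (w @ [y])"
    by (simp add: dsum_snoc add.commute)
  finally show ?case .
qed

lemma dsum_coassoc:
  "dsum (\<lambda>a b. dsum (\<lambda>c d. K c d b) a) w = dsum (\<lambda>a b. dsum (\<lambda>c d. K a c d) b) w"
proof (induction w arbitrary: K rule: rev_induct)
  case Nil thus ?case by simp
next
  case (snoc y w)
  have "dsum (\<lambda>a b. dsum (\<lambda>c d. K c d b) a) (w @ [y])
     = dsum (\<lambda>a b. dsum (\<lambda>c d. K (c @ [y]) d b) a) w + dsum (\<lambda>a b. dsum (\<lambda>c d. K c (d @ [y]) b) a) w
       + dsum (\<lambda>a b. dsum (\<lambda>c d. K c d (b @ [y])) a) w"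
    by (simp only: dsum_snoc dsum_add)
  also have "\<dots> = dsum (\<lambda>a b. dsum (\<lambda>c d. K (a @ [y]) c d) b) w + dsum (\<lambda>a b. dsum (\<lambda>c d. K a (c @ [y]) d) b) w
       + dsum (\<lambda>a b. dsum (\<lambda>c d. K a c (d @ [y])) b) w"
    by (simp only: snoc.IH[of "\<lambda>c d b. K (c @ [y]) d b"] snoc.IH[of "\<lambda>c d b. K c (d @ [y]) b"]
        snoc.IH[of "\<lambda>c d b. K c d (b @ [y])"])
  also have "\<dots> = dsum (\<lambda>a b. dsum (\<lambda>c d. K a c d) b) (w @ [y])"
    by (simp only: dsum_snoc dsum_add add.assoc)
  finally show ?case .
qed

lemma dsum_append:
  "dsum G (u @ v) = dsum (\<lambda>a b. dsum (\<lambda>c d. G (a @ c) (b @ d)) v) u"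
proof (induction v arbitrary: G rule: rev_induct)
  case Nil thus ?case by simp
next
  case (snoc y v)
  have "dsum G (u @ v @ [y]) = dsum G ((u @ v) @ [y])" by simp
  also have "\<dots> = dsum (\<lambda>a b. G (a @ [y]) b) (u @ v) + dsum (\<lambda>a b. G a (b @ [y])) (u @ v)"
    by (rule dsum_snoc)
  also have "\<dots> = dsum (\<lambda>a b. dsum (\<lambda>c d. G (a @ c @ [y]) (b @ d)) v) u
      + dsum (\<lambda>a b. dsum (\<lambda>c d. G (a @ c) (b @ d @ [y])) v) u"
    by (simp add: snoc.IH)
  also have "\<dots> = dsum (\<lambda>a b. dsum (\<lambda>c d. G (a @ c) (b @ d)) (v @ [y])) u"
    by (simp only: dsum_snoc dsum_add append_assoc)
  finally show ?case .
qed



section \<open>Generic bilinear maps\<close>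

lemma bil_eq:
  fixes f :: "'a \<Rightarrow> 'k::field" and g :: "'b \<Rightarrow> 'k"
  shows "fin f \<Longrightarrow> fin g \<Longrightarrow> lext H (tens f g) = lext (\<lambda>u. lext (\<lambda>v. H (u, v)) g) f"
  by (rule lext_tens)

lemma tens_dl[simp]: "tens (dl u) (dl v) = (dl (u, v) :: _ \<Rightarrow> 'k::field)"
  by (rule ext) (clarsimp simp: tens_def dl_def split: prod.splits)

lemma bil_dl[simp]: "lext H (tens (dl u) (dl v) :: _ \<Rightarrow> 'k::field) = H (u, v)"
  by simp

lemma bil_lin1:
  fixes g :: "'b \<Rightarrow> 'k::field"
  assumes "fin g" shows "lin (\<lambda>f :: 'a \<Rightarrow> 'k. lext H (tens f g))"
  unfolding lin_def
proof (intro allI impI)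
  fix f :: "'a \<Rightarrow> 'k" assume f: "fin f"
  show "lext H (tens f g) = lext (\<lambda>a. lext H (tens (dl a) g)) f"
    by (simp only: bil_eq[OF f assms] bil_eq[OF fin_dl assms] lext_dl)
qed

lemma bil_lin2:
  fixes f :: "'a \<Rightarrow> 'k::field"
  assumes "fin f" shows "lin (\<lambda>g :: 'b \<Rightarrow> 'k. lext H (tens f g))"
  unfolding lin_def
proof (intro allI impI)
  fix g :: "'b \<Rightarrow> 'k" assume g: "fin g"
  have "lext H (tens f g) = lext (\<lambda>u. lext (\<lambda>v. H (u, v)) g) f"
    by (rule bil_eq[OF assms g])
  also have "\<dots> = lext (\<lambda>v. lext (\<lambda>u. H (u, v)) f) g"
    by (rule lext_swap[OF assms g])
  also have "\<dots> = lext (\<lambda>a. lext H (tens f (dl a))) g"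
    by (simp only: bil_eq[OF assms fin_dl] lext_dl)
  finally show "lext H (tens f g) = lext (\<lambda>a. lext H (tens f (dl a))) g" .
qed

lemma bil_fin:
  fixes f :: "'a \<Rightarrow> 'k::field" and g :: "'b \<Rightarrow> 'k"
  shows "fin f \<Longrightarrow> fin g \<Longrightarrow> (\<And>p. fin (H p)) \<Longrightarrow> fin (lext H (tens f g))"
  by simp

lemma tens_eq: "fin f \<Longrightarrow> fin g \<Longrightarrow> tens f g = lext (\<lambda>u. lext (\<lambda>v. dl (u,v)) g) (f :: _ \<Rightarrow> 'k::field)"
  using bil_eq[of f g dl] by (simp add: lext_dl_id)

lemma tens_lin1:
  fixes g :: "'b \<Rightarrow> 'k::field"
  assumes g: "fin g" shows "lin (\<lambda>f :: 'a \<Rightarrow> 'k. tens f g)"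
  unfolding lin_def
proof (intro allI impI)
  fix f :: "'a \<Rightarrow> 'k" assume f: "fin f"
  have "tens f g = lext dl (tens f g)" by (simp add: lext_dl_id f g)
  also have "\<dots> = lext (\<lambda>a. lext dl (tens (dl a) g)) f"
    by (rule linD[OF bil_lin1[OF g] f])
  also have "\<dots> = lext (\<lambda>a. tens (dl a) g) f" by (simp add: lext_dl_id g)
  finally show "tens f g = lext (\<lambda>a. tens (dl a) g) f" .
qed

lemma tens_lin2:
  fixes f :: "'a \<Rightarrow> 'k::field"
  assumes f: "fin f" shows "lin (\<lambda>g :: 'b \<Rightarrow> 'k. tens f g)"
  unfolding lin_def
proof (intro allI impI)
  fix g :: "'b \<Rightarrow> 'k" assume g: "fin g"
  have "tens f g = lext dl (tens f g)" by (simp add: lext_dl_id f g)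
  also have "\<dots> = lext (\<lambda>a. lext dl (tens f (dl a))) g"
    by (rule linD[OF bil_lin2[OF f] g])
  also have "\<dots> = lext (\<lambda>a. tens f (dl a)) g" by (simp add: lext_dl_id f)
  finally show "tens f g = lext (\<lambda>a. tens f (dl a)) g" .
qed



lemma lin_eq2:
  fixes P Q :: "('a \<Rightarrow> 'k::field) \<Rightarrow> ('b \<Rightarrow> 'k) \<Rightarrow> ('c \<Rightarrow> 'k)"
  assumes l1: "\<And>g. fin g \<Longrightarrow> lin (\<lambda>f. P f g)" and l2: "\<And>g. fin g \<Longrightarrow> lin (\<lambda>f. Q f g)"
    and r1: "\<And>a. lin (\<lambda>g. P (dl a) g)" and r2: "\<And>a. lin (\<lambda>g. Q (dl a) g)"
    and b: "\<And>a b. P (dl a) (dl b) = Q (dl a) (dl b)"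
    and f: "fin f" and g: "fin g"
  shows "P f g = Q f g"
proof (rule lin_eq[OF l1[OF g] l2[OF g] f])
  fix a show "P (dl a) g = Q (dl a) g"
    by (rule lin_eq[OF r1 r2 g]) (rule b)
qed

section \<open>Concatenation\<close>

lemma mult_dl[simp]: "tv_mult (dl u) (dl v) = (dl (u @ v) :: _ \<Rightarrow> 'k::field)"
  by (simp add: tv_mult_def)

lemma mult_lin1: "fin g \<Longrightarrow> lin (\<lambda>f. tv_mult f (g :: _ \<Rightarrow> 'k::field))"
  unfolding tv_mult_def by (rule bil_lin1)
lemma mult_lin2: "fin f \<Longrightarrow> lin (\<lambda>g. tv_mult (f :: _ \<Rightarrow> 'k::field) g)"
  unfolding tv_mult_def by (rule bil_lin2)
lemma fin_mult[simp]: "fin f \<Longrightarrow> fin g \<Longrightarrow> fin (tv_mult f (g :: _ \<Rightarrow> 'k::field))"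
  unfolding tv_mult_def by (simp add: split_def)

lemma mult_assoc:
  fixes f g h :: "'b list \<Rightarrow> 'k::field"
  assumes "fin f" "fin g" "fin h"
  shows "tv_mult (tv_mult f g) h = tv_mult f (tv_mult g h)"
proof -
  have L1: "lin (\<lambda>f. tv_mult (tv_mult f g) h)"
    by (rule lin_comp[OF mult_lin1 mult_lin1]) (simp_all add: assms)
  have L2: "lin (\<lambda>f. tv_mult f (tv_mult g h))"
    by (rule mult_lin1) (simp add: assms)
  show ?thesis
  proof (rule lin_eq[OF L1 L2 assms(1)])
    fix a
    show "tv_mult (tv_mult (dl a) g) h = tv_mult (dl a) (tv_mult g h)"
    proof (rule lin_eq2[where P = "\<lambda>g h. tv_mult (tv_mult (dl a) g) h"
          and Q = "\<lambda>g h. tv_mult (dl a) (tv_mult g h)", OF _ _ _ _ _ assms(2,3)])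
      fix g :: "'b list \<Rightarrow> 'k" assume g: "fin g"
      show "lin (\<lambda>f. tv_mult (tv_mult (dl a) f) g)"
        by (rule lin_comp[OF mult_lin1[OF g] mult_lin2]) simp_all
      show "lin (\<lambda>f. tv_mult (dl a) (tv_mult f g))"
        by (rule lin_comp[OF mult_lin2 mult_lin1[OF g]]) (simp_all add: g)
    next
      fix b
      show "lin (\<lambda>g. tv_mult (tv_mult (dl a) (dl b)) g)" by (rule mult_lin2) simp
      show "lin (\<lambda>g. tv_mult (dl a) (tv_mult (dl b) g))"
        by (rule lin_comp[OF mult_lin2 mult_lin2]) simp_all
    next
      fix b c show "tv_mult (tv_mult (dl a) (dl b)) (dl c) = tv_mult (dl a) (tv_mult (dl b) (dl c))"
        by simp
    qed
  qed
qed

lemma mult_unit_left: "fin f \<Longrightarrow> tv_mult tv_unit f = (f :: _ \<Rightarrow> 'k::field)"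
  unfolding tv_unit_def by (rule lin_eq[OF mult_lin2 lin_id]) simp_all

lemma mult_unit_right: "fin f \<Longrightarrow> tv_mult f tv_unit = (f :: _ \<Rightarrow> 'k::field)"
  unfolding tv_unit_def by (rule lin_eq[OF mult_lin1 lin_id]) simp_all

lemma mult_add1: "fin f \<Longrightarrow> fin f' \<Longrightarrow> fin g \<Longrightarrow> tv_mult (f + f') g = tv_mult f g + tv_mult f' (g :: _ \<Rightarrow> 'k::field)"
  by (rule lin_addD[OF mult_lin1])
lemma mult_add2: "fin f \<Longrightarrow> fin g \<Longrightarrow> fin g' \<Longrightarrow> tv_mult f (g + g') = tv_mult f g + tv_mult f (g' :: _ \<Rightarrow> 'k::field)"
  by (rule lin_addD[OF mult_lin2])
lemma mult_diff1: "fin f \<Longrightarrow> fin f' \<Longrightarrow> fin g \<Longrightarrow> tv_mult (f - f') g = tv_mult f g - tv_mult f' (g :: _ \<Rightarrow> 'k::field)"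
  by (rule lin_diffD[OF mult_lin1])
lemma mult_diff2: "fin f \<Longrightarrow> fin g \<Longrightarrow> fin g' \<Longrightarrow> tv_mult f (g - g') = tv_mult f g - tv_mult f (g' :: _ \<Rightarrow> 'k::field)"
  by (rule lin_diffD[OF mult_lin2])
lemma mult_zero1[simp]: "tv_mult 0 g = 0"
  by (rule ext) (simp add: tv_mult_def tens_def lext_def spt_def)
lemma mult_zero2[simp]: "tv_mult f 0 = 0"
  by (rule ext) (simp add: tv_mult_def tens_def lext_def spt_def)

lemma mult2_dl[simp]: "tv_mult2 (dl (a, b)) (dl (c, d)) = (dl (a @ c, b @ d) :: _ \<Rightarrow> 'k::field)"
  by (simp add: tv_mult2_def)
lemma mult2_lin1: "fin g \<Longrightarrow> lin (\<lambda>f. tv_mult2 f (g :: _ \<Rightarrow> 'k::field))"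
  unfolding tv_mult2_def by (rule bil_lin1)
lemma mult2_lin2: "fin f \<Longrightarrow> lin (\<lambda>g. tv_mult2 (f :: _ \<Rightarrow> 'k::field) g)"
  unfolding tv_mult2_def by (rule bil_lin2)
lemma fin_mult2[simp]: "fin f \<Longrightarrow> fin g \<Longrightarrow> fin (tv_mult2 f (g :: _ \<Rightarrow> 'k::field))"
  unfolding tv_mult2_def by (simp add: split_def)

section \<open>Coproduct\<close>

lemma cop_dl[simp]: "tv_cop (dl w) = (tv_cop_w w :: _ \<Rightarrow> 'k::field)"
  by (simp add: tv_cop_def)
lemma cop_lin: "lin (tv_cop :: (_ \<Rightarrow> 'k::field) \<Rightarrow> _)"
  unfolding tv_cop_def[abs_def] by (rule lin_lext)
lemma fin_cop[simp]: "fin f \<Longrightarrow> fin (tv_cop (f :: _ \<Rightarrow> 'k::field))"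
  by (simp add: tv_cop_def)

lemma mult2_dl_cop_w:
  "tv_mult2 (dl (a, b)) (tv_cop_w v) = dsum (\<lambda>c d. dl (a @ c, b @ d) :: _ \<Rightarrow> 'k::field) v"
proof -
  have "tv_mult2 (dl (a, b)) (tv_cop_w v :: _ \<Rightarrow> 'k) = lext (\<lambda>q. tv_mult2 (dl (a, b)) (dl q)) (tv_cop_w v)"
    by (rule linD[OF mult2_lin2]) simp_all
  also have "\<dots> = dsum (\<lambda>c d. dl (a @ c, b @ d)) v" by (simp add: lext_cop_w)
  finally show ?thesis .
qed

lemma cop_w_append: "(tv_cop_w (u @ v) :: _ \<Rightarrow> 'k::field) = tv_mult2 (tv_cop_w u) (tv_cop_w v)"
proof -
  have "tv_mult2 (tv_cop_w u) (tv_cop_w v :: _ \<Rightarrow> 'k) = lext (\<lambda>p. tv_mult2 (dl p) (tv_cop_w v)) (tv_cop_w u)"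
    by (rule linD[OF mult2_lin1]) simp_all
  also have "\<dots> = dsum (\<lambda>a b. dsum (\<lambda>c d. dl (a @ c, b @ d)) v) u"
    by (simp add: lext_cop_w mult2_dl_cop_w)
  also have "\<dots> = tv_cop_w (u @ v)"
    by (simp add: cop_w_dsum[of "u @ v"] dsum_append)
  finally show ?thesis by simp
qed

lemma cop_mult:
  fixes f g :: "'b list \<Rightarrow> 'k::field"
  assumes "fin f" "fin g"
  shows "tv_cop (tv_mult f g) = tv_mult2 (tv_cop f) (tv_cop g)"
proof (rule lin_eq2[where P = "\<lambda>f g. tv_cop (tv_mult f g)" and Q = "\<lambda>f g. tv_mult2 (tv_cop f) (tv_cop g)", OF _ _ _ _ _ assms])
  fix g :: "'b list \<Rightarrow> 'k" assume g: "fin g"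
  show "lin (\<lambda>f. tv_cop (tv_mult f g))" by (rule lin_comp[OF cop_lin mult_lin1[OF g]]) (simp add: g)
  show "lin (\<lambda>f. tv_mult2 (tv_cop f) (tv_cop g))" by (rule lin_comp[OF mult2_lin1 cop_lin]) (simp_all add: g)
next
  fix a
  show "lin (\<lambda>g. tv_cop (tv_mult (dl a) g))" by (rule lin_comp[OF cop_lin mult_lin2]) simp_all
  show "lin (\<lambda>g. tv_mult2 (tv_cop (dl a)) (tv_cop g))" by (rule lin_comp[OF mult2_lin2 cop_lin]) simp_all
next
  fix a b show "tv_cop (tv_mult (dl a) (dl b)) = tv_mult2 (tv_cop (dl a)) (tv_cop (dl b) :: _ \<Rightarrow> 'k)"
    by (simp add: cop_w_append)
qed

lemma lext_cop: "fin f \<Longrightarrow> lext h (tv_cop (f :: _ \<Rightarrow> 'k::field)) = lext (\<lambda>w. dsum (\<lambda>a b. h (a, b)) w) f"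
  by (simp add: tv_cop_def lext_comp lext_cop_w)

section \<open>Counit\<close>

lemma eps_dl: "tv_eps (dl w :: _ \<Rightarrow> 'k::field) = (if w = [] then 1 else 0)"
  by (simp add: tv_eps_def dl_def)

lemma eps_lext: "fin f \<Longrightarrow> tv_eps (lext h f) = lext (\<lambda>a. (\<lambda>_::unit. tv_eps (h a))) f ()"
  by (simp add: tv_eps_def lext_def)

lemma eps_mult: 
  fixes f g :: "'b list \<Rightarrow> 'k::field"
  assumes "fin f" "fin g"
  shows "tv_eps (tv_mult f g) = tv_eps f * tv_eps g"
proof -
  have "tv_mult f g [] = (\<Sum>p\<in>spt f \<times> spt g. tens f g p * dl (fst p @ snd p) [])"
    by (simp add: tv_mult_def lext_def spt_tens split_def)
  also have "\<dots> = (\<Sum>p\<in>spt f \<times> spt g. if p = ([], []) then f [] * g [] else 0)"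
    by (rule sum.cong) (auto simp: dl_def tens_def)
  also have "\<dots> = f [] * g []"
    using assms by (auto simp: fin_def spt_def)
  finally show ?thesis by (simp add: tv_eps_def)
qed



lemma tens_dl_right: "fin X \<Longrightarrow> tens X (dl b) = lext (\<lambda>p. dl (p, b)) (X :: _ \<Rightarrow> 'k::field)"
  by (simp add: linD[OF tens_lin1[OF fin_dl]])

lemma coassoc_w:
  "dsum (\<lambda>a b. tens (tv_cop_w a) (dl b)) w
   = dsum (\<lambda>a b. lext (\<lambda>(c, d). dl ((a, c), d)) (tv_cop_w b) :: _ \<Rightarrow> 'k::field) w"
proof -
  have "dsum (\<lambda>a b. tens (tv_cop_w a) (dl b) :: _ \<Rightarrow> 'k) w
      = dsum (\<lambda>a b. dsum (\<lambda>c d. dl ((c, d), b)) a) w"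
    by (simp add: tens_dl_right lext_cop_w)
  also have "\<dots> = dsum (\<lambda>a b. dsum (\<lambda>c d. dl ((a, c), d)) b) w"
    by (rule dsum_coassoc)
  also have "\<dots> = dsum (\<lambda>a b. lext (\<lambda>(c, d). dl ((a, c), d)) (tv_cop_w b)) w"
    by (simp add: lext_cop_w)
  finally show ?thesis .
qed

lemma lext_at_nil: "fin f \<Longrightarrow> lext (\<lambda>w. if w = [] then g else 0) f = sc (f []) (g :: _ \<Rightarrow> 'k::field)"
proof (rule ext)
  fix z assume f: "fin f"
  have "lext (\<lambda>w. if w = [] then g else 0) f z = (\<Sum>w\<in>spt f. f w * (if w = [] then g else 0) z)"
    by (simp add: lext_def)
  also have "\<dots> = (\<Sum>w\<in>spt f. if w = [] then f [] * g z else 0)"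
    by (rule sum.cong) auto
  also have "\<dots> = f [] * g z" using f by (auto simp: fin_def spt_def)
  finally show "lext (\<lambda>w. if w = [] then g else 0) f z = sc (f []) g z" by simp
qed

lemma sc_sc: "sc c (sc d f) = sc (c * d) f"
  by (rule ext) (simp add: mult.assoc)
lemma sc_neg_cancel: "sc (-1) f + f = 0"
  by (rule ext) simp
lemma sc_neg_cancel2: "f + sc (-1) f = 0"
  by (rule ext) simp
lemma sc_zero_right[simp]: "sc c 0 = 0"
  by (rule ext) simp
lemma mult_sc1: "fin f \<Longrightarrow> fin g \<Longrightarrow> tv_mult (sc c f) g = sc c (tv_mult f (g :: _ \<Rightarrow> 'k::field))"
  by (rule lin_scD[OF mult_lin1])
lemma mult_sc2: "fin f \<Longrightarrow> fin g \<Longrightarrow> tv_mult f (sc c g) = sc c (tv_mult f (g :: _ \<Rightarrow> 'k::field))"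
  by (rule lin_scD[OF mult_lin2])

definition antip :: "'b list \<Rightarrow> 'b list \<Rightarrow> 'k::field" where
  "antip w = sc ((-1) ^ length w) (dl (rev w))"

lemma fin_antip[simp]: "fin (antip w)"
  by (simp add: antip_def)

lemma mult_antip_dl: "tv_mult (antip a) (dl b) = sc ((-1) ^ length a) (dl (rev a @ b) :: _ \<Rightarrow> 'k::field)"
  by (simp add: antip_def mult_sc1)
lemma mult_dl_antip: "tv_mult (dl a) (antip b) = sc ((-1) ^ length b) (dl (a @ rev b) :: _ \<Rightarrow> 'k::field)"
  by (simp add: antip_def mult_sc2)

lemma antip_left_w:
  "dsum (\<lambda>a b. tv_mult (antip a) (dl b)) w = (if w = [] then dl [] else (0 :: _ \<Rightarrow> 'k::field))"
proof (induction w rule: rev_induct)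
  case Nil thus ?case by (simp add: mult_antip_dl)
next
  case (snoc y w)
  let ?P = "dsum (\<lambda>a b. tv_mult (antip a) (dl b)) w :: _ \<Rightarrow> 'k"
  have e1: "dsum (\<lambda>a b. tv_mult (antip (a @ [y])) (dl b)) w = sc (-1) (tv_mult (dl [y]) ?P)"
  proof -
    have "dsum (\<lambda>a b. tv_mult (antip (a @ [y])) (dl b)) w
        = dsum (\<lambda>a b. sc (-1) (tv_mult (dl [y]) (tv_mult (antip a) (dl b)))) w"
      by (rule dsum_cong) (simp add: mult_antip_dl mult_sc2 sc_sc)
    also have "\<dots> = sc (-1) (dsum (\<lambda>a b. tv_mult (dl [y]) (tv_mult (antip a) (dl b))) w)"
      by (rule dsum_sc)
    also have "\<dots> = sc (-1) (tv_mult (dl [y]) ?P)"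
      by (simp add: lin_dsum[OF mult_lin2])
    finally show ?thesis .
  qed
  have e2: "dsum (\<lambda>a b. tv_mult (antip a) (dl (b @ [y]))) w = tv_mult ?P (dl [y])"
  proof -
    have "dsum (\<lambda>a b. tv_mult (antip a) (dl (b @ [y]))) w
        = dsum (\<lambda>a b. tv_mult (tv_mult (antip a) (dl b)) (dl [y])) w"
      by (rule dsum_cong) (simp add: mult_assoc)
    also have "\<dots> = tv_mult ?P (dl [y])"
      by (simp add: lin_dsum[OF mult_lin1])
    finally show ?thesis .
  qed
  show ?case
    by (simp add: dsum_snoc e1 e2 snoc.IH sc_neg_cancel)
qed

lemma antip_right_w:
  "dsum (\<lambda>a b. tv_mult (dl a) (antip b)) w = (if w = [] then dl [] else (0 :: _ \<Rightarrow> 'k::field))"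
proof (induction w rule: rev_induct)
  case Nil thus ?case by (simp add: mult_dl_antip)
next
  case (snoc y w)
  let ?X = "dsum (\<lambda>a b. tv_mult (dl (a @ [y])) (antip b)) w :: _ \<Rightarrow> 'k"
  have "dsum (\<lambda>a b. tv_mult (dl a) (antip (b @ [y]))) w
      = dsum (\<lambda>a b. sc (-1) (tv_mult (dl (a @ [y])) (antip b))) w"
    by (rule dsum_cong) (simp add: mult_dl_antip sc_sc)
  also have "\<dots> = sc (-1) ?X" by (rule dsum_sc)
  finally show ?case by (simp add: dsum_snoc sc_neg_cancel2)
qed

lemma hopf: "tv_hopf TYPE('b) TYPE('k::field)"
  unfolding tv_hopf_def
proof (intro conjI allI impI)
  fix f g h :: "'b list \<Rightarrow> 'k"
  assume "fin f \<and> fin g" thus "fin (tv_mult f g)" by simp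
next
  fix f g :: "'b list \<Rightarrow> 'k"
  assume "fin f \<and> fin g" thus "fin (tv_cop f)" by simp
next
  fix f g h :: "'b list \<Rightarrow> 'k"
  assume "fin f \<and> fin g \<and> fin h" thus "tv_mult (tv_mult f g) h = tv_mult f (tv_mult g h)"
    by (simp add: mult_assoc)
next
  fix f :: "'b list \<Rightarrow> 'k" assume "fin f"
  thus "tv_mult tv_unit f = f" "tv_mult f tv_unit = f" by (simp_all add: mult_unit_left mult_unit_right)
next
  fix f :: "'b list \<Rightarrow> 'k" assume f: "fin f"
  show "lext (\<lambda>(a, b). tens (tv_cop_w a) (dl b)) (tv_cop f)
        = lext (\<lambda>(a, b). lext (\<lambda>(c, d). dl ((a, c), d)) (tv_cop_w b)) (tv_cop f)"
    by (simp add: lext_cop f coassoc_w)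
next
  fix f :: "'b list \<Rightarrow> 'k" assume f: "fin f"
  have eq1: "(\<lambda>(a, b). (\<lambda>x. tv_eps (dl a :: 'b list \<Rightarrow> 'k) * dl b x)) = (\<lambda>(a, b). if a = [] then dl b else 0)"
    by (auto simp: fun_eq_iff eps_dl)
  have "lext (\<lambda>(a, b). (\<lambda>x. tv_eps (dl a :: 'b list \<Rightarrow> 'k) * dl b x)) (tv_cop f)
      = lext (\<lambda>w. dsum (\<lambda>a b. if a = [] then dl b else 0) w) f"
    by (simp only: eq1 lext_cop[OF f]) simp
  also have "\<dots> = f" by (simp add: dsum_counit1 lext_dl_id f)
  finally show "lext (\<lambda>(a, b). (\<lambda>x. tv_eps (dl a :: 'b list \<Rightarrow> 'k) * dl b x)) (tv_cop f) = f" .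
  have eq2: "(\<lambda>(a, b). (\<lambda>x. dl a x * tv_eps (dl b :: 'b list \<Rightarrow> 'k))) = (\<lambda>(a, b). if b = [] then dl a else 0)"
    by (auto simp: fun_eq_iff eps_dl)
  have "lext (\<lambda>(a, b). (\<lambda>x. dl a x * tv_eps (dl b :: 'b list \<Rightarrow> 'k))) (tv_cop f)
      = lext (\<lambda>w. dsum (\<lambda>a b. if b = [] then dl a else 0) w) f"
    by (simp only: eq2 lext_cop[OF f]) simp
  also have "\<dots> = f" by (simp add: dsum_counit2 lext_dl_id f)
  finally show "lext (\<lambda>(a, b). (\<lambda>x. dl a x * tv_eps (dl b :: 'b list \<Rightarrow> 'k))) (tv_cop f) = f" .
next
  fix f g :: "'b list \<Rightarrow> 'k" assume "fin f \<and> fin g"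
  thus "tv_cop (tv_mult f g) = tv_mult2 (tv_cop f) (tv_cop g)" "tv_eps (tv_mult f g) = tv_eps f * tv_eps g"
    by (simp_all add: cop_mult eps_mult)
next
  show "tv_cop (tv_unit :: 'b list \<Rightarrow> 'k) = dl ([], [])"
    by (simp add: tv_unit_def cop_w_dsum)
  show "tv_eps (tv_unit :: 'b list \<Rightarrow> 'k) = 1"
    by (simp add: tv_unit_def eps_dl)
next
  show "\<exists>s :: 'b list \<Rightarrow> 'b list \<Rightarrow> 'k. (\<forall>w. fin (s w)) \<and>
        (\<forall>f. fin f \<longrightarrow>
          lext (\<lambda>(a, b). tv_mult (s a) (dl b)) (tv_cop f) = (\<lambda>x. tv_eps f * tv_unit x) \<and>
          lext (\<lambda>(a, b). tv_mult (dl a) (s b)) (tv_cop f) = (\<lambda>x. tv_eps f * tv_unit x))"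
  proof (intro exI[of _ antip] conjI allI impI)
    fix f :: "'b list \<Rightarrow> 'k" assume f: "fin f"
    show "lext (\<lambda>(a, b). tv_mult (antip a) (dl b)) (tv_cop f) = (\<lambda>x. tv_eps f * tv_unit x)"
      by (simp add: lext_cop f antip_left_w lext_at_nil tv_eps_def tv_unit_def fun_eq_iff)
    show "lext (\<lambda>(a, b). tv_mult (dl a) (antip b)) (tv_cop f) = (\<lambda>x. tv_eps f * tv_unit x)"
      by (simp add: lext_cop f antip_right_w lext_at_nil tv_eps_def tv_unit_def fun_eq_iff)
  qed simp
qed

lemma cocomm: "tv_cocommutative TYPE('b) TYPE('k::field)"
  unfolding tv_cocommutative_def
proof (intro allI impI)
  fix f :: "'b list \<Rightarrow> 'k" and u v assume f: "fin f"
  have c: "tv_cop_w w (u, v) = (tv_cop_w w (v, u) :: 'k)" for w :: "'b list"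
  proof -
    have "(tv_cop_w w :: _ \<Rightarrow> 'k) = dsum (\<lambda>a b. dl (b, a)) w"
      by (simp add: cop_w_dsum dsum_comm[of "\<lambda>a b. dl (a, b)"])
    hence "tv_cop_w w (u, v) = (dsum (\<lambda>a b. dl (b, a)) w (u, v) :: 'k)" by simp
    also have "\<dots> = dsum (\<lambda>a b. dl (a, b)) w (v, u)"
      by (simp add: dsum_def sum_fun_apply dl_def conj_commute)
    also have "\<dots> = tv_cop_w w (v, u)" by (simp add: cop_w_dsum)
    finally show ?thesis .
  qed
  show "tv_cop f (u, v) = tv_cop f (v, u)"
    by (simp add: tv_cop_def lext_def c)
qed



lemma fin_lext2: "fin f \<Longrightarrow> (\<And>a. a \<in> spt f \<Longrightarrow> fin (h a)) \<Longrightarrow> fin (lext h (f::'a\<Rightarrow>'k::field))"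
  by (simp add: lext_spt)

definition emb :: "('b \<Rightarrow> 'k::field) \<Rightarrow> 'b list \<Rightarrow> 'k" where
  "emb g = lext (\<lambda>z. dl [z]) g"

lemma fin_emb[simp]: "fin g \<Longrightarrow> fin (emb g)"
  by (simp add: emb_def)

lemma sum_spt_delta:
  fixes f :: "'a \<Rightarrow> 'k::field"
  assumes "fin f"
  shows "(\<Sum>v\<in>spt f. f v * (if v = a then c else 0)) = f a * c"
proof -
  have "(\<Sum>v\<in>spt f. f v * (if v = a then c else 0)) = (\<Sum>v\<in>spt f. if v = a then f a * c else 0)"
    by (rule sum.cong) auto
  also have "\<dots> = f a * c" using assms by (auto simp: fin_def spt_def)
  finally show ?thesis .
qed

lemma mult_dl_single_pt:
  fixes f :: "'b list \<Rightarrow> 'k::field"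
  assumes f: "fin f"
  shows "tv_mult (dl [x]) f w = (case w of [] \<Rightarrow> 0 | z # w' \<Rightarrow> if z = x then f w' else 0)"
proof -
  have "tv_mult (dl [x]) f = lext (\<lambda>v. tv_mult (dl [x]) (dl v)) f"
    by (rule linD[OF mult_lin2 f]) simp
  hence e: "tv_mult (dl [x]) f w = (\<Sum>v\<in>spt f. f v * dl (x # v) w)"
    by (simp add: lext_def)
  show ?thesis
  proof (cases w)
    case Nil thus ?thesis by (subst e) (simp add: dl_def)
  next
    case (Cons z w')
    have "(\<Sum>v\<in>spt f. f v * dl (x # v) w) = (\<Sum>v\<in>spt f. f v * (if v = w' then (if z = x then 1 else 0) else 0))"
      by (rule sum.cong) (auto simp: dl_def Cons)
    also have "\<dots> = f w' * (if z = x then 1 else 0)" by (rule sum_spt_delta[OF f])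
    finally show ?thesis by (simp only: e) (simp add: Cons)
  qed
qed

lemma mult_emb_dl_pt:
  fixes g :: "'b \<Rightarrow> 'k::field"
  assumes g: "fin g"
  shows "tv_mult (emb g) (dl u) w = (case w of [] \<Rightarrow> 0 | z # w' \<Rightarrow> if w' = u then g z else 0)"
proof -
  have "tv_mult (emb g) (dl u) = lext (\<lambda>p. tv_mult (dl p) (dl u)) (emb g)"
    by (rule linD[OF mult_lin1]) (simp_all add: g)
  also have "\<dots> = lext (\<lambda>z. lext (\<lambda>p. dl (p @ u)) (dl [z])) g"
    unfolding emb_def by (simp add: lext_comp g)
  also have "\<dots> = lext (\<lambda>z. dl (z # u)) g" by simp
  finally have e: "tv_mult (emb g) (dl u) w = (\<Sum>z\<in>spt g. g z * dl (z # u) w)"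
    by (simp add: lext_def)
  show ?thesis
  proof (cases w)
    case Nil thus ?thesis by (subst e) (simp add: dl_def)
  next
    case (Cons z w')
    have "(\<Sum>v\<in>spt g. g v * dl (v # u) w) = (\<Sum>v\<in>spt g. g v * (if v = z then (if w' = u then 1 else 0) else 0))"
      by (rule sum.cong) (auto simp: dl_def Cons)
    also have "\<dots> = g z * (if w' = u then 1 else 0)" by (rule sum_spt_delta[OF g])
    finally show ?thesis by (simp only: e) (simp add: Cons)
  qed
qed

locale mag =
  fixes m :: "'b \<Rightarrow> 'b \<Rightarrow> 'b \<Rightarrow> 'k::field"
  assumes mfin: "fin (m x y)"
begin

lemma wl_nil[simp]: "tv_wl m [] y = 0"
  by (simp add: tv_wl_def zero_fun_def)

lemma wl_cons_pt_cons:
  "tv_wl m (x # u) y (z # w') = (if w' = u then m x y z else 0) + (if z = x then tv_wl m u y w' else 0)"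
proof -
  have "tv_wl m (x # u) y (z # w') = (\<Sum>i<Suc (length u).
      if length (z # w') = Suc (length u) \<and> take i (z # w') = take i (x # u) \<and> drop (Suc i) (z # w') = drop (Suc i) (x # u)
      then m ((x # u) ! i) y ((z # w') ! i) else 0)"
    by (simp add: tv_wl_def)
  also have "\<dots> = (if w' = u then m x y z else 0) + (\<Sum>i<length u.
      if z = x \<and> (length w' = length u \<and> take i w' = take i u \<and> drop (Suc i) w' = drop (Suc i) u)
      then m (u ! i) y (w' ! i) else 0)"
    unfolding sum.lessThan_Suc_shift by (auto intro!: sum.cong)
  also have "(\<Sum>i<length u.
      if z = x \<and> (length w' = length u \<and> take i w' = take i u \<and> drop (Suc i) w' = drop (Suc i) u)
      then m (u ! i) y (w' ! i) else 0) = (if z = x then tv_wl m u y w' else 0)"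
    by (auto simp: tv_wl_def intro!: sum.cong)
  finally show ?thesis .
qed

lemma wl_cons_pt:
  "tv_wl m (x # u) y w = (case w of [] \<Rightarrow> 0 | z # w' \<Rightarrow>
       (if w' = u then m x y z else 0) + (if z = x then tv_wl m u y w' else 0))"
  by (cases w) (simp add: tv_wl_def, simp only: wl_cons_pt_cons list.case)

lemma wl_cons:
  assumes "fin (tv_wl m u y)"
  shows "tv_wl m (x # u) y = tv_mult (emb (m x y)) (dl u) + tv_mult (dl [x]) (tv_wl m u y)"
  by (rule ext) (simp add: wl_cons_pt mult_emb_dl_pt mfin mult_dl_single_pt assms split: list.splits)

lemma fin_wl[simp]: "fin (tv_wl m u y)"
proof (induction u)
  case Nil show ?case by (simp only: wl_nil fin_zero)
next
  case (Cons x u)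
  show ?case unfolding wl_cons[OF Cons.IH]
    by (rule fin_add; rule fin_mult) (simp_all add: mfin Cons.IH)
qed

lemma wl_cons': "tv_wl m (x # u) y = tv_mult (emb (m x y)) (dl u) + tv_mult (dl [x]) (tv_wl m u y)"
  by (rule wl_cons) simp

lemma wl_single: "tv_wl m [x] y = emb (m x y)"
  by (simp add: wl_cons' mfin mult_unit_right[unfolded tv_unit_def])

lemma wl_append:
  "tv_wl m (u @ v) y = tv_mult (tv_wl m u y) (dl v) + tv_mult (dl u) (tv_wl m v y)"
proof (induction u)
  case Nil show ?case
    by (simp only: wl_nil mult_zero1 append_Nil mult_unit_left[unfolded tv_unit_def, OF fin_wl] add_0_left)
next
  case (Cons x u)
  let ?E = "emb (m x y)"
  have fE: "fin ?E" by (simp add: mfin)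
  have a1: "tv_mult ?E (dl (u @ v)) = tv_mult (tv_mult ?E (dl u)) (dl v)"
    by (simp add: mult_assoc fE flip: mult_dl)
  have a2: "tv_mult (dl [x]) (tv_mult (tv_wl m u y) (dl v)) = tv_mult (tv_mult (dl [x]) (tv_wl m u y)) (dl v)"
    by (simp add: mult_assoc)
  have d: "dl (x # u) = tv_mult (dl [x]) (dl u)" by simp
  have a3: "tv_mult (dl [x]) (tv_mult (dl u) (tv_wl m v y)) = tv_mult (dl (x # u)) (tv_wl m v y)"
    by (simp only: d mult_assoc[OF fin_dl fin_dl fin_wl])
  have "tv_wl m ((x # u) @ v) y = tv_mult ?E (dl (u @ v)) + tv_mult (dl [x]) (tv_wl m (u @ v) y)"
    by (simp only: append_Cons wl_cons')
  also have "\<dots> = tv_mult ?E (dl (u @ v)) + tv_mult (dl [x]) (tv_mult (tv_wl m u y) (dl v) + tv_mult (dl u) (tv_wl m v y))"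
    by (simp only: Cons.IH)
  also have "\<dots> = tv_mult (tv_mult ?E (dl u)) (dl v)
      + (tv_mult (tv_mult (dl [x]) (tv_wl m u y)) (dl v) + tv_mult (dl (x # u)) (tv_wl m v y))"
    by (simp only: mult_add2[OF fin_dl fin_mult[OF fin_wl fin_dl] fin_mult[OF fin_dl fin_wl]] a1 a2 a3)
  also have "\<dots> = tv_mult (tv_mult ?E (dl u) + tv_mult (dl [x]) (tv_wl m u y)) (dl v) + tv_mult (dl (x # u)) (tv_wl m v y)"
    by (simp only: mult_add1[OF fin_mult[OF fE fin_dl] fin_mult[OF fin_dl fin_wl] fin_dl] add.assoc)
  also have "\<dots> = tv_mult (tv_wl m (x # u) y) (dl v) + tv_mult (dl (x # u)) (tv_wl m v y)"
    by (simp only: wl_cons')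
  finally show ?case .
qed

lemma spt_wl: "spt (tv_wl m u y) \<subseteq> {w. length w = length u}"
  by (auto simp: spt_def tv_wl_def intro: ccontr)

end


lemma len_ind:
  fixes LA LB :: "('b list \<Rightarrow> 'k::field) \<Rightarrow> ('c \<Rightarrow> 'k)"
  assumes l1: "lin LA" and l2: "lin LB"
    and base: "LA (dl []) = LB (dl [])"
    and step: "\<And>w y. (\<And>g. fin g \<Longrightarrow> spt g \<subseteq> {v. length v = length w} \<Longrightarrow> LA g = LB g)
                 \<Longrightarrow> LA (dl (w @ [y])) = LB (dl (w @ [y]))"
    and h: "fin h"
  shows "LA h = LB h"
proof -
  have words: "\<forall>w. length w = n \<longrightarrow> LA (dl w) = LB (dl w)" for n
  proof (induction n)
    case 0 thus ?case using base by simp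
  next
    case (Suc n)
    show ?case
    proof (intro allI impI)
      fix w :: "'b list" assume "length w = Suc n"
      then obtain w' y where w: "w = w' @ [y]" and lw': "length w' = n"
        by (metis length_Suc_conv_rev)
      have "LA (dl (w' @ [y])) = LB (dl (w' @ [y]))"
      proof (rule step)
        fix g :: "'b list \<Rightarrow> 'k" assume g: "fin g" "spt g \<subseteq> {v. length v = length w'}"
        show "LA g = LB g"
          by (rule lin_eq[OF l1 l2 g(1)]) (use g(2) Suc.IH lw' in auto)
      qed
      thus "LA (dl w) = LB (dl w)" by (simp add: w)
    qed
  qed
  show ?thesis by (rule lin_eq[OF l1 l2 h]) (use words in blast)
qed

context mag begin

definition act :: "('b list \<Rightarrow> 'k) \<Rightarrow> 'b \<Rightarrow> 'b list \<Rightarrow> 'k" where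
  "act f y = lext (\<lambda>v. tv_wl m v y) f"

lemma act_dl[simp]: "act (dl u) y = tv_wl m u y"
  by (simp add: act_def)
lemma act_lin: "lin (\<lambda>f. act f y)"
  by (simp add: act_def)
lemma fin_act[simp]: "fin f \<Longrightarrow> fin (act f y)"
  by (simp add: act_def)
lemma act_zero[simp]: "act 0 y = 0"
  by (simp add: act_def)

lemma spt_act: "spt f \<subseteq> {v. length v = n} \<Longrightarrow> spt (act f y) \<subseteq> {v. length v = n}"
proof
  fix z assume sf: "spt f \<subseteq> {v. length v = n}" and z: "z \<in> spt (act f y)"
  hence "(\<Sum>v\<in>spt f. f v * tv_wl m v y z) \<noteq> 0" by (simp add: spt_def act_def lext_def)
  then obtain v where v: "v \<in> spt f" "f v * tv_wl m v y z \<noteq> 0"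
    using sum.neutral[of "spt f" "\<lambda>v. f v * tv_wl m v y z"] by blast
  hence "z \<in> spt (tv_wl m v y)" by (simp add: spt_def)
  hence "length z = length v" using spt_wl by blast
  thus "z \<in> {v. length v = n}" using v sf by auto
qed

lemma act_mult:
  assumes f: "fin f" and g: "fin g"
  shows "act (tv_mult f g) y = tv_mult (act f y) g + tv_mult f (act g y)"
proof (rule lin_eq2[where P = "\<lambda>f g. act (tv_mult f g) y" and Q = "\<lambda>f g. tv_mult (act f y) g + tv_mult f (act g y)", OF _ _ _ _ _ f g])
  fix g :: "'b list \<Rightarrow> 'k" assume g: "fin g"
  show "lin (\<lambda>f. act (tv_mult f g) y)" by (rule lin_comp[OF act_lin mult_lin1[OF g]]) (simp add: g)
  show "lin (\<lambda>f. tv_mult (act f y) g + tv_mult f (act g y))"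
    by (rule lin_add[OF lin_comp[OF mult_lin1[OF g] act_lin] mult_lin1]) (simp_all add: g)
next
  fix a
  show "lin (\<lambda>g. act (tv_mult (dl a) g) y)" by (rule lin_comp[OF act_lin mult_lin2]) simp_all
  show "lin (\<lambda>g. tv_mult (act (dl a) y) g + tv_mult (dl a) (act g y))"
    by (rule lin_add[OF mult_lin2 lin_comp[OF mult_lin2 act_lin]]) simp_all
next
  fix a b show "act (tv_mult (dl a) (dl b)) y = tv_mult (act (dl a) y) (dl b) + tv_mult (dl a) (act (dl b) y)"
    by (simp add: wl_append)
qed

lemma wstar_nil[simp]: "tv_wstar m u [] = dl u"
  by (simp add: tv_wstar_def)

lemma wstar_snoc:
  "tv_wstar m u (w @ [y]) = act (tv_wstar m u w) y - lext (tv_wstar m u) (tv_wl m w y)"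
proof -
  have "tv_wstar m u (w @ [y]) = (\<lambda>z. act (tv_W m (length w) u w) y z
        - lext (\<lambda>v. tv_W m (length w) u v) (tv_wl m w y) z)"
    by (simp add: tv_wstar_def act_def)
  also have "lext (\<lambda>v. tv_W m (length w) u v) (tv_wl m w y) = lext (tv_wstar m u) (tv_wl m w y)"
  proof (rule lext_cong)
    fix a assume "a \<in> spt (tv_wl m w y)"
    hence "length a = length w" using spt_wl by blast
    thus "tv_W m (length w) u a = tv_wstar m u a" by (simp add: tv_wstar_def)
  qed
  finally show ?thesis by (simp add: tv_wstar_def fun_eq_iff)
qed

lemma fin_wstar[simp]: "fin (tv_wstar m u w)"
proof -
  have "\<forall>w. length w = n \<longrightarrow> fin (tv_wstar m u w)" for n
  proof (induction n)
    case 0 thus ?case by simp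
  next
    case (Suc n)
    show ?case
    proof (intro allI impI)
      fix w :: "'b list" assume "length w = Suc n"
      then obtain w' y where w: "w = w' @ [y]" and lw': "length w' = n"
        by (metis length_Suc_conv_rev)
      have "fin (lext (tv_wstar m u) (tv_wl m w' y))"
        by (rule fin_lext2) (use Suc.IH spt_wl lw' in auto)
      thus "fin (tv_wstar m u w)"
        using Suc.IH lw' by (simp add: w wstar_snoc)
    qed
  qed
  thus ?thesis by blast
qed

lemma star_eq: "fin f \<Longrightarrow> fin g \<Longrightarrow> tv_star m f g = lext (\<lambda>u. lext (\<lambda>w. tv_wstar m u w) g) f"
  unfolding tv_star_def by (simp add: bil_eq)
lemma star_dl[simp]: "tv_star m (dl u) (dl w) = tv_wstar m u w"
  by (simp add: tv_star_def)
lemma star_lin1: "fin g \<Longrightarrow> lin (\<lambda>f. tv_star m f g)"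
  unfolding tv_star_def by (rule bil_lin1)
lemma star_lin2: "fin f \<Longrightarrow> lin (\<lambda>g. tv_star m f g)"
  unfolding tv_star_def by (rule bil_lin2)
lemma fin_star[simp]: "fin f \<Longrightarrow> fin g \<Longrightarrow> fin (tv_star m f g)"
  unfolding tv_star_def by (simp add: split_def)
lemma star_dl_left: "fin g \<Longrightarrow> tv_star m (dl u) g = lext (tv_wstar m u) g"
  by (simp add: star_eq)

lemma star_unit: "fin f \<Longrightarrow> tv_star m f (dl []) = f"
  by (rule lin_eq[OF star_lin1 lin_id]) simp_all

lemma star_snoc:
  assumes f: "fin f"
  shows "tv_star m f (dl (w @ [y])) = act (tv_star m f (dl w)) y - tv_star m f (tv_wl m w y)"
proof (rule lin_eq[OF star_lin1 _ f])
  show "lin (\<lambda>f. act (tv_star m f (dl w)) y - tv_star m f (tv_wl m w y))"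
    by (rule lin_diff[OF lin_comp[OF act_lin star_lin1] star_lin1]) simp_all
next
  fix a show "tv_star m (dl a) (dl (w @ [y])) = act (tv_star m (dl a) (dl w)) y - tv_star m (dl a) (tv_wl m w y)"
    by (simp add: wstar_snoc star_dl_left)
qed simp

lemma star_mult_letter:
  assumes f: "fin f" and X: "fin X"
  shows "tv_star m f (tv_mult X (dl [y])) = act (tv_star m f X) y - tv_star m f (act X y)"
proof (rule lin_eq[OF lin_comp[OF star_lin2[OF f] mult_lin1[OF fin_dl]] _ X])
  show "lin (\<lambda>X. act (tv_star m f X) y - tv_star m f (act X y))"
    by (rule lin_diff[OF lin_comp[OF act_lin star_lin2[OF f]] lin_comp[OF star_lin2[OF f] act_lin]]) (simp_all add: f)
next
  fix a show "tv_star m f (tv_mult (dl a) (dl [y])) = act (tv_star m f (dl a)) y - tv_star m f (act (dl a) y)"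
    by (simp add: star_snoc f)
qed simp

end


lemma tens_add1: "fin f \<Longrightarrow> fin f' \<Longrightarrow> fin g \<Longrightarrow> tens (f + f') g = tens f g + tens f' (g :: _ \<Rightarrow> 'k::field)"
  by (rule lin_addD[OF tens_lin1])
lemma tens_add2: "fin f \<Longrightarrow> fin g \<Longrightarrow> fin g' \<Longrightarrow> tens f (g + g') = tens f g + tens f (g' :: _ \<Rightarrow> 'k::field)"
  by (rule lin_addD[OF tens_lin2])
lemma tens_diff1: "fin f \<Longrightarrow> fin f' \<Longrightarrow> fin g \<Longrightarrow> tens (f - f') g = tens f g - tens f' (g :: _ \<Rightarrow> 'k::field)"
  by (rule lin_diffD[OF tens_lin1])
lemma tens_diff2: "fin f \<Longrightarrow> fin g \<Longrightarrow> fin g' \<Longrightarrow> tens f (g - g') = tens f g - tens f (g' :: _ \<Rightarrow> 'k::field)"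
  by (rule lin_diffD[OF tens_lin2])
lemma tens_zero1[simp]: "tens 0 (g :: _ \<Rightarrow> 'k::field) = 0"
  by (rule ext) (simp add: tens_def split_def)
lemma tens_zero2[simp]: "tens (f :: _ \<Rightarrow> 'k::field) 0 = 0"
  by (rule ext) (simp add: tens_def split_def)
lemma zero_fun_eta[simp]: "(\<lambda>x. 0) = 0"
  by (simp add: zero_fun_def)

lemma mult2_add1: "fin f \<Longrightarrow> fin f' \<Longrightarrow> fin g \<Longrightarrow> tv_mult2 (f + f') g = tv_mult2 f g + tv_mult2 f' (g :: _ \<Rightarrow> 'k::field)"
  by (rule lin_addD[OF mult2_lin1])
lemma mult2_add2: "fin f \<Longrightarrow> fin g \<Longrightarrow> fin g' \<Longrightarrow> tv_mult2 f (g + g') = tv_mult2 f g + tv_mult2 f (g' :: _ \<Rightarrow> 'k::field)"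
  by (rule lin_addD[OF mult2_lin2])

lemma cop_add: "fin f \<Longrightarrow> fin g \<Longrightarrow> tv_cop (f + g) = tv_cop f + tv_cop (g :: _ \<Rightarrow> 'k::field)"
  by (rule lin_addD[OF cop_lin])
lemma cop_diff: "fin f \<Longrightarrow> fin g \<Longrightarrow> tv_cop (f - g) = tv_cop f - tv_cop (g :: _ \<Rightarrow> 'k::field)"
  by (rule lin_diffD[OF cop_lin])
lemma cop_zero[simp]: "tv_cop 0 = (0 :: _ \<Rightarrow> 'k::field)"
  by (rule lin_zeroD[OF cop_lin])

lemma mult2_tens:
  fixes f g h k :: "'b list \<Rightarrow> 'k::field"
  assumes f: "fin f" and g: "fin g" and h: "fin h" and k: "fin k"
  shows "tv_mult2 (tens f g) (tens h k) = tens (tv_mult f h) (tv_mult g k)"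
proof (rule lin_eq2[where P = "\<lambda>f h. tv_mult2 (tens f g) (tens h k)" and Q = "\<lambda>f h. tens (tv_mult f h) (tv_mult g k)", OF _ _ _ _ _ f h])
  fix h :: "'b list \<Rightarrow> 'k" assume h: "fin h"
  show "lin (\<lambda>f. tv_mult2 (tens f g) (tens h k))"
    by (rule lin_comp[OF mult2_lin1 tens_lin1]) (simp_all add: g h k)
  show "lin (\<lambda>f. tens (tv_mult f h) (tv_mult g k))"
    by (rule lin_comp[OF tens_lin1 mult_lin1]) (simp_all add: g h k)
next
  fix a
  show "lin (\<lambda>h. tv_mult2 (tens (dl a) g) (tens h k))"
    by (rule lin_comp[OF mult2_lin2 tens_lin1]) (simp_all add: g k)
  show "lin (\<lambda>h. tens (tv_mult (dl a) h) (tv_mult g k))"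
    by (rule lin_comp[OF tens_lin1 mult_lin2]) (simp_all add: g k)
next
  fix a c
  show "tv_mult2 (tens (dl a) g) (tens (dl c) k) = tens (tv_mult (dl a) (dl c)) (tv_mult g k)"
  proof (rule lin_eq2[where P = "\<lambda>g k. tv_mult2 (tens (dl a) g) (tens (dl c) k)" and Q = "\<lambda>g k. tens (tv_mult (dl a) (dl c)) (tv_mult g k)", OF _ _ _ _ _ g k])
    fix k :: "'b list \<Rightarrow> 'k" assume k: "fin k"
    show "lin (\<lambda>g. tv_mult2 (tens (dl a) g) (tens (dl c) k))"
      by (rule lin_comp[OF mult2_lin1 tens_lin2]) (simp_all add: k)
    show "lin (\<lambda>g. tens (tv_mult (dl a) (dl c)) (tv_mult g k))"
      by (rule lin_comp[OF tens_lin2 mult_lin1]) (simp_all add: k)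
  next
    fix b
    show "lin (\<lambda>k. tv_mult2 (tens (dl a) (dl b)) (tens (dl c) k))"
      by (rule lin_comp[OF mult2_lin2 tens_lin2]) simp_all
    show "lin (\<lambda>k. tens (tv_mult (dl a) (dl c)) (tv_mult (dl b) k))"
      by (rule lin_comp[OF tens_lin2 mult_lin2]) simp_all
  next
    fix b d show "tv_mult2 (tens (dl a) (dl b)) (tens (dl c) (dl d)) = tens (tv_mult (dl a) (dl c)) (tv_mult (dl b) (dl d) :: _ \<Rightarrow> 'k)"
      by simp
  qed
qed

lemma emb_lin: "lin (emb :: ('b \<Rightarrow> 'k::field) \<Rightarrow> _)"
  unfolding emb_def[abs_def] by (rule lin_lext)
lemma emb_dl[simp]: "emb (dl z) = (dl [z] :: _ \<Rightarrow> 'k::field)"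
  by (simp add: emb_def)

lemma cop_w_single: "(tv_cop_w [x] :: _ \<Rightarrow> 'k::field) = dl ([x], []) + dl ([], [x])"
proof -
  have "(tv_cop_w [x] :: _ \<Rightarrow> 'k) = dsum (\<lambda>a b. dl (a, b)) ([] @ [x])"
    by (simp only: append_Nil cop_w_dsum)
  also have "\<dots> = dsum (\<lambda>a b. dl (a @ [x], b)) [] + dsum (\<lambda>a b. dl (a, b @ [x])) []"
    by (rule dsum_snoc)
  also have "\<dots> = dl ([x], []) + dl ([], [x])" by (simp only: dsum_nil append_Nil)
  finally show ?thesis .
qed

lemma cop_emb:
  fixes g :: "'b \<Rightarrow> 'k::field"
  assumes g: "fin g"
  shows "tv_cop (emb g) = tens (emb g) (dl []) + tens (dl []) (emb g)"
proof -
  have l1: "lin (\<lambda>g :: 'b \<Rightarrow> 'k. tv_cop (emb g))"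
    by (rule lin_comp[OF cop_lin emb_lin]) (simp only: emb_dl fin_dl)
  have l2: "lin (\<lambda>g :: 'b \<Rightarrow> 'k. tens (emb g) (dl []) + tens (dl []) (emb g :: _ \<Rightarrow> 'k))"
    by (rule lin_add[OF lin_comp[OF tens_lin1 emb_lin] lin_comp[OF tens_lin2 emb_lin]]) (simp_all only: emb_dl fin_dl)
  have b: "tv_cop (emb (dl a)) = tens (emb (dl a)) (dl []) + tens (dl []) (emb (dl a) :: _ \<Rightarrow> 'k)" for a
    by (simp only: emb_dl cop_dl cop_w_single tens_dl append_Nil)
  show ?thesis by (rule lin_eq[OF l1 l2 g b])
qed

context mag begin

definition act2 :: "('b list \<times> 'b list \<Rightarrow> 'k) \<Rightarrow> 'b \<Rightarrow> 'b list \<times> 'b list \<Rightarrow> 'k" where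
  "act2 F y = lext (\<lambda>(a, b). tens (tv_wl m a y) (dl b) + tens (dl a) (tv_wl m b y)) F"

lemma act2_dl[simp]: "act2 (dl (a, b)) y = tens (tv_wl m a y) (dl b) + tens (dl a) (tv_wl m b y)"
  by (rule ext) (simp add: act2_def)
lemma act2_lin: "lin (\<lambda>F. act2 F y)"
  by (simp add: act2_def)
lemma fin_act2[simp]: "fin F \<Longrightarrow> fin (act2 F y)"
  by (simp add: act2_def split_def)

lemma act2_tens:
  fixes P Q :: "'b list \<Rightarrow> 'k"
  assumes P: "fin P" and Q: "fin Q"
  shows "act2 (tens P Q) y = tens (act P y) Q + tens P (act Q y)"
proof (rule lin_eq2[where P = "\<lambda>P Q. act2 (tens P Q) y" and Q = "\<lambda>P Q. tens (act P y) Q + tens P (act Q y)", OF _ _ _ _ _ P Q])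
  fix Q :: "'b list \<Rightarrow> 'k" assume Q: "fin Q"
  show "lin (\<lambda>P. act2 (tens P Q) y)" by (rule lin_comp[OF act2_lin tens_lin1[OF Q]]) (simp add: Q)
  show "lin (\<lambda>P. tens (act P y) Q + tens P (act Q y))"
    by (rule lin_add[OF lin_comp[OF tens_lin1[OF Q] act_lin] tens_lin1]) (simp_all add: Q)
next
  fix a
  show "lin (\<lambda>Q. act2 (tens (dl a) Q) y)" by (rule lin_comp[OF act2_lin tens_lin2]) simp_all
  show "lin (\<lambda>Q. tens (act (dl a) y) Q + tens (dl a) (act Q y))"
    by (rule lin_add[OF tens_lin2 lin_comp[OF tens_lin2 act_lin]]) simp_all
qed simp

lemma act2_mult2:
  fixes F G :: "'b list \<times> 'b list \<Rightarrow> 'k"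
  assumes F: "fin F" and G: "fin G"
  shows "act2 (tv_mult2 F G) y = tv_mult2 (act2 F y) G + tv_mult2 F (act2 G y)"
proof (rule lin_eq2[where P = "\<lambda>F G. act2 (tv_mult2 F G) y" and Q = "\<lambda>F G. tv_mult2 (act2 F y) G + tv_mult2 F (act2 G y)", OF _ _ _ _ _ F G])
  fix G :: "'b list \<times> 'b list \<Rightarrow> 'k" assume G: "fin G"
  show "lin (\<lambda>F. act2 (tv_mult2 F G) y)" by (rule lin_comp[OF act2_lin mult2_lin1[OF G]]) (simp add: G)
  show "lin (\<lambda>F. tv_mult2 (act2 F y) G + tv_mult2 F (act2 G y))"
    by (rule lin_add[OF lin_comp[OF mult2_lin1[OF G] act2_lin] mult2_lin1]) (simp_all add: G)
next
  fix p
  show "lin (\<lambda>G. act2 (tv_mult2 (dl p) G) y)" by (rule lin_comp[OF act2_lin mult2_lin2]) simp_all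
  show "lin (\<lambda>G. tv_mult2 (act2 (dl p) y) G + tv_mult2 (dl p) (act2 G y))"
    by (rule lin_add[OF mult2_lin2 lin_comp[OF mult2_lin2 act2_lin]]) simp_all
next
  fix p q :: "'b list \<times> 'b list"
  obtain a b where p: "p = (a, b)" by (cases p)
  obtain c d where q: "q = (c, d)" by (cases q)
  have t: "\<And>x y. dl (x, y) = tens (dl x) (dl y :: _ \<Rightarrow> 'k)" by simp
  have e1: "tv_mult2 (act2 (dl (a, b)) y) (dl (c, d)) = tens (tv_mult (tv_wl m a y) (dl c)) (dl (b @ d)) + tens (dl (a @ c)) (tv_mult (tv_wl m b y) (dl d))"
    by (simp only: act2_dl t[of c d]) (simp add: mult2_add1 mult2_tens del: tens_dl)
  have e2: "tv_mult2 (dl (a, b)) (act2 (dl (c, d)) y) = tens (tv_mult (dl a) (tv_wl m c y)) (dl (b @ d)) + tens (dl (a @ c)) (tv_mult (dl b) (tv_wl m d y))"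
    by (simp only: act2_dl t[of a b]) (simp add: mult2_add2 mult2_tens del: tens_dl)
  have e3: "act2 (tv_mult2 (dl (a, b)) (dl (c, d))) y = tens (tv_mult (tv_wl m a y) (dl c)) (dl (b @ d)) + tens (tv_mult (dl a) (tv_wl m c y)) (dl (b @ d))
     + (tens (dl (a @ c)) (tv_mult (tv_wl m b y) (dl d)) + tens (dl (a @ c)) (tv_mult (dl b) (tv_wl m d y)))"
    by (simp add: wl_append tens_add1 tens_add2 del: tens_dl)
  show "act2 (tv_mult2 (dl p) (dl q)) y = tv_mult2 (act2 (dl p) y) (dl q) + tv_mult2 (dl p) (act2 (dl q) y)"
    unfolding p q e1 e2 e3 by (simp only: add_ac)
qed

lemma cop_act_w: "tv_cop (tv_wl m w y) = act2 (tv_cop_w w) y"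
proof (induction w rule: rev_induct)
  case Nil thus ?case by (simp add: cop_w_dsum)
next
  case (snoc x w)
  let ?E = "emb (m x y)"
  have fE: "fin ?E" by (simp add: mfin)
  have "tv_cop (tv_wl m (w @ [x]) y) = tv_cop (tv_mult (tv_wl m w y) (dl [x]) + tv_mult (dl w) ?E)"
    by (simp add: wl_append wl_single)
  also have "\<dots> = tv_mult2 (act2 (tv_cop_w w) y) (tv_cop_w [x]) + tv_mult2 (tv_cop_w w) (tv_cop ?E)"
    by (simp add: cop_add cop_mult fE snoc.IH)
  also have "tv_cop ?E = act2 (tv_cop_w [x]) y"
    by (simp add: cop_emb mfin cop_w_single wl_single lin_addD[OF act2_lin] add.commute)
  also have "tv_mult2 (act2 (tv_cop_w w) y) (tv_cop_w [x]) + tv_mult2 (tv_cop_w w) (act2 (tv_cop_w [x]) y)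
      = act2 (tv_cop_w (w @ [x])) y"
    by (simp add: cop_w_append act2_mult2)
  finally show ?case .
qed

lemma cop_act: "fin f \<Longrightarrow> tv_cop (act f y) = act2 (tv_cop f) y"
  by (rule lin_eq[OF lin_comp[OF cop_lin act_lin] lin_comp[OF act2_lin cop_lin]]) (simp_all add: cop_act_w)

end


context mag begin

lemma star2_dl[simp]: "tv_star2 m (dl (a, b)) (dl (c, d)) = tens (tv_wstar m a c) (tv_wstar m b d)"
  by (simp add: tv_star2_def)
lemma star2_lin1: "fin G \<Longrightarrow> lin (\<lambda>F. tv_star2 m F G)"
  unfolding tv_star2_def by (rule bil_lin1)
lemma star2_lin2: "fin F \<Longrightarrow> lin (\<lambda>G. tv_star2 m F G)"
  unfolding tv_star2_def by (rule bil_lin2)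
lemma fin_star2[simp]: "fin F \<Longrightarrow> fin G \<Longrightarrow> fin (tv_star2 m F G)"
  unfolding tv_star2_def by (simp add: split_def)

lemma star2_tens:
  fixes f g h k :: "'b list \<Rightarrow> 'k"
  assumes f: "fin f" and g: "fin g" and h: "fin h" and k: "fin k"
  shows "tv_star2 m (tens f g) (tens h k) = tens (tv_star m f h) (tv_star m g k)"
proof (rule lin_eq2[where P = "\<lambda>f h. tv_star2 m (tens f g) (tens h k)" and Q = "\<lambda>f h. tens (tv_star m f h) (tv_star m g k)", OF _ _ _ _ _ f h])
  fix h :: "'b list \<Rightarrow> 'k" assume h: "fin h"
  show "lin (\<lambda>f. tv_star2 m (tens f g) (tens h k))"
    by (rule lin_comp[OF star2_lin1 tens_lin1]) (simp_all add: g h k)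
  show "lin (\<lambda>f. tens (tv_star m f h) (tv_star m g k))"
    by (rule lin_comp[OF tens_lin1 star_lin1]) (simp_all add: g h k)
next
  fix a
  show "lin (\<lambda>h. tv_star2 m (tens (dl a) g) (tens h k))"
    by (rule lin_comp[OF star2_lin2 tens_lin1]) (simp_all add: g k)
  show "lin (\<lambda>h. tens (tv_star m (dl a) h) (tv_star m g k))"
    by (rule lin_comp[OF tens_lin1 star_lin2]) (simp_all add: g k)
next
  fix a c
  show "tv_star2 m (tens (dl a) g) (tens (dl c) k) = tens (tv_star m (dl a) (dl c)) (tv_star m g k)"
  proof (rule lin_eq2[where P = "\<lambda>g k. tv_star2 m (tens (dl a) g) (tens (dl c) k)" and Q = "\<lambda>g k. tens (tv_star m (dl a) (dl c)) (tv_star m g k)", OF _ _ _ _ _ g k])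
    fix k :: "'b list \<Rightarrow> 'k" assume k: "fin k"
    show "lin (\<lambda>g. tv_star2 m (tens (dl a) g) (tens (dl c) k))"
      by (rule lin_comp[OF star2_lin1 tens_lin2]) (simp_all add: k)
    show "lin (\<lambda>g. tens (tv_star m (dl a) (dl c)) (tv_star m g k))"
      by (rule lin_comp[OF tens_lin2 star_lin1]) (simp_all add: k)
  next
    fix b
    show "lin (\<lambda>k. tv_star2 m (tens (dl a) (dl b)) (tens (dl c) k))"
      by (rule lin_comp[OF star2_lin2 tens_lin2]) simp_all
    show "lin (\<lambda>k. tens (tv_star m (dl a) (dl c)) (tv_star m (dl b) k))"
      by (rule lin_comp[OF tens_lin2 star_lin2]) simp_all
  next
    fix b d show "tv_star2 m (tens (dl a) (dl b)) (tens (dl c) (dl d)) = tens (tv_star m (dl a) (dl c)) (tv_star m (dl b) (dl d))"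
      by simp
  qed
qed

lemma star2_unit: "fin F \<Longrightarrow> tv_star2 m F (dl ([], [])) = F"
proof (rule lin_eq[OF star2_lin1 lin_id])
  fix p :: "'b list \<times> 'b list"
  obtain a b where "p = (a, b)" by (cases p)
  thus "tv_star2 m (dl p) (dl ([], [])) = dl p" by simp
qed simp_all

lemma star2_add2: "fin F \<Longrightarrow> fin G \<Longrightarrow> fin G' \<Longrightarrow> tv_star2 m F (G + G') = tv_star2 m F G + tv_star2 m F G'"
  by (rule lin_addD[OF star2_lin2])
lemma star2_diff2: "fin F \<Longrightarrow> fin G \<Longrightarrow> fin G' \<Longrightarrow> tv_star2 m F (G - G') = tv_star2 m F G - tv_star2 m F G'"
  by (rule lin_diffD[OF star2_lin2])

lemma LP2:
  fixes F G :: "'b list \<times> 'b list \<Rightarrow> 'k"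
  assumes F: "fin F" and G: "fin G"
  shows "tv_star2 m F (tv_mult2 G (tv_cop_w [y])) = act2 (tv_star2 m F G) y - tv_star2 m F (act2 G y)"
proof (rule lin_eq2[where P = "\<lambda>F G. tv_star2 m F (tv_mult2 G (tv_cop_w [y]))" and Q = "\<lambda>F G. act2 (tv_star2 m F G) y - tv_star2 m F (act2 G y)", OF _ _ _ _ _ F G])
  fix G :: "'b list \<times> 'b list \<Rightarrow> 'k" assume G: "fin G"
  show "lin (\<lambda>F. tv_star2 m F (tv_mult2 G (tv_cop_w [y])))" by (rule star2_lin1) (simp add: G)
  show "lin (\<lambda>F. act2 (tv_star2 m F G) y - tv_star2 m F (act2 G y))"
    by (rule lin_diff[OF lin_comp[OF act2_lin star2_lin1[OF G]] star2_lin1]) (simp_all add: G)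
next
  fix p
  show "lin (\<lambda>G. tv_star2 m (dl p) (tv_mult2 G (tv_cop_w [y])))"
    by (rule lin_comp[OF star2_lin2 mult2_lin1]) simp_all
  show "lin (\<lambda>G. act2 (tv_star2 m (dl p) G) y - tv_star2 m (dl p) (act2 G y))"
    by (rule lin_diff[OF lin_comp[OF act2_lin star2_lin2] lin_comp[OF star2_lin2 act2_lin]]) simp_all
next
  fix p q :: "'b list \<times> 'b list"
  obtain a b where p: "p = (a, b)" by (cases p)
  obtain c d where q: "q = (c, d)" by (cases q)
  have t: "\<And>x y. dl (x, y) = tens (dl x) (dl y :: _ \<Rightarrow> 'k)" by simp
  have s1: "tv_wstar m a (c @ [y]) = act (tv_wstar m a c) y - tv_star m (dl a) (tv_wl m c y)"
    by (simp add: wstar_snoc star_dl_left)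
  have s2: "tv_wstar m b (d @ [y]) = act (tv_wstar m b d) y - tv_star m (dl b) (tv_wl m d y)"
    by (simp add: wstar_snoc star_dl_left)
  have l: "tv_star2 m (dl (a, b)) (tv_mult2 (dl (c, d)) (tv_cop_w [y]))
      = tens (act (tv_wstar m a c) y) (tv_wstar m b d) - tens (tv_star m (dl a) (tv_wl m c y)) (tv_wstar m b d)
        + (tens (tv_wstar m a c) (act (tv_wstar m b d) y) - tens (tv_wstar m a c) (tv_star m (dl b) (tv_wl m d y)))"
    by (simp add: cop_w_single mult2_add2 star2_add2 s1 s2 tens_diff1 tens_diff2)
  have r: "act2 (tv_star2 m (dl (a, b)) (dl (c, d))) y - tv_star2 m (dl (a, b)) (act2 (dl (c, d)) y)
      = tens (act (tv_wstar m a c) y) (tv_wstar m b d) + tens (tv_wstar m a c) (act (tv_wstar m b d) y)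
        - (tens (tv_star m (dl a) (tv_wl m c y)) (tv_wstar m b d) + tens (tv_wstar m a c) (tv_star m (dl b) (tv_wl m d y)))"
  proof -
    have r1: "act2 (tv_star2 m (dl (a, b)) (dl (c, d))) y = tens (act (tv_wstar m a c) y) (tv_wstar m b d) + tens (tv_wstar m a c) (act (tv_wstar m b d) y)"
      by (simp only: star2_dl act2_tens[OF fin_wstar fin_wstar])
    have "tv_star2 m (dl (a, b)) (act2 (dl (c, d)) y) = tv_star2 m (tens (dl a) (dl b)) (tens (tv_wl m c y) (dl d) + tens (dl c) (tv_wl m d y))"
      by (simp only: act2_dl tens_dl)
    also have "\<dots> = tens (tv_star m (dl a) (tv_wl m c y)) (tv_wstar m b d) + tens (tv_wstar m a c) (tv_star m (dl b) (tv_wl m d y))"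
      by (simp add: star2_add2 star2_tens del: tens_dl)
    finally show ?thesis using r1 by simp
  qed
  show "tv_star2 m (dl p) (tv_mult2 (dl q) (tv_cop_w [y])) = act2 (tv_star2 m (dl p) (dl q)) y - tv_star2 m (dl p) (act2 (dl q) y)"
    unfolding p q l r by (simp add: algebra_simps)
qed

theorem cop_star:
  fixes f g :: "'b list \<Rightarrow> 'k"
  assumes f: "fin f" and g: "fin g"
  shows "tv_cop (tv_star m f g) = tv_star2 m (tv_cop f) (tv_cop g)"
proof (rule lin_eq[OF lin_comp[OF cop_lin star_lin1[OF g]] lin_comp[OF star2_lin1 cop_lin] f])
  fix u
  show "tv_cop (tv_star m (dl u) g) = tv_star2 m (tv_cop (dl u)) (tv_cop g)"
  proof (rule len_ind[where LA = "\<lambda>g. tv_cop (tv_star m (dl u) g)" and LB = "\<lambda>g. tv_star2 m (tv_cop (dl u)) (tv_cop g)", OF _ _ _ _ g])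
    show "lin (\<lambda>g. tv_cop (tv_star m (dl u) g))" by (rule lin_comp[OF cop_lin star_lin2]) simp_all
    show "lin (\<lambda>g. tv_star2 m (tv_cop (dl u)) (tv_cop g))" by (rule lin_comp[OF star2_lin2 cop_lin]) simp_all
    show "tv_cop (tv_star m (dl u) (dl [])) = tv_star2 m (tv_cop (dl u)) (tv_cop (dl []))"
      by (simp add: star_unit cop_w_dsum[of "[]"] star2_unit)
  next
    fix w :: "'b list" and y :: 'b
    assume IH: "\<And>g. fin g \<Longrightarrow> spt g \<subseteq> {v. length v = length w} \<Longrightarrow>
      tv_cop (tv_star m (dl u) g) = tv_star2 m (tv_cop (dl u)) (tv_cop g)"
    have i1: "tv_cop (tv_star m (dl u) (dl w)) = tv_star2 m (tv_cop_w u) (tv_cop_w w)"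
      using IH[of "dl w"] by (simp add: spt_dl)
    have i2: "tv_cop (tv_star m (dl u) (tv_wl m w y)) = tv_star2 m (tv_cop_w u) (act2 (tv_cop_w w) y)"
      using IH[of "tv_wl m w y"] spt_wl by (simp add: cop_act_w)
    have "tv_cop (tv_star m (dl u) (dl (w @ [y]))) = act2 (tv_star2 m (tv_cop_w u) (tv_cop_w w)) y - tv_star2 m (tv_cop_w u) (act2 (tv_cop_w w) y)"
      by (simp only: star_snoc[OF fin_dl]) (simp add: cop_diff cop_act i1 i2 del: star_dl)
    also have "\<dots> = tv_star2 m (tv_cop_w u) (tv_mult2 (tv_cop_w w) (tv_cop_w [y]))"
      by (simp add: LP2)
    also have "\<dots> = tv_star2 m (tv_cop (dl u)) (tv_cop (dl (w @ [y])))"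
      by (simp add: cop_w_append)
    finally show "tv_cop (tv_star m (dl u) (dl (w @ [y]))) = tv_star2 m (tv_cop (dl u)) (tv_cop (dl (w @ [y])))" .
  qed
qed (simp_all add: g)

end


lemma spt_lextD: "z \<in> spt (lext h f) \<Longrightarrow> \<exists>a\<in>spt f. z \<in> spt (h a)"
proof -
  assume "z \<in> spt (lext h f)"
  hence "(\<Sum>a\<in>spt f. f a * h a z) \<noteq> 0" by (simp add: spt_def lext_def)
  then obtain a where "a \<in> spt f" "f a * h a z \<noteq> 0"
    using sum.neutral[of "spt f" "\<lambda>a. f a * h a z"] by blast
  thus ?thesis by (auto simp: spt_def)
qed

lemma spt_diffD: "z \<in> spt (f - g) \<Longrightarrow> z \<in> spt f \<or> z \<in> spt (g :: _ \<Rightarrow> 'k::ab_group_add)"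
  by (auto simp: spt_def)

context mag begin

lemma spt_actD: "z \<in> spt (act f y) \<Longrightarrow> \<exists>v\<in>spt f. z \<in> spt (tv_wl m v y)"
  unfolding act_def by (rule spt_lextD)

lemma spt_wstar_gen:
  fixes wd :: "'b list \<Rightarrow> nat"
  assumes wd0: "wd [] = 0" and wds: "\<And>w y. wd (w @ [y]) = wd w + wd [y]"
    and wdl: "\<And>v y z. z \<in> spt (tv_wl m v y) \<Longrightarrow> wd z = wd v + wd [y]"
  shows "spt (tv_wstar m u w) \<subseteq> {z. length z = length u \<and> wd z = wd u + wd w}"
proof -
  have "\<forall>w. length w = n \<longrightarrow> spt (tv_wstar m u w) \<subseteq> {z. length z = length u \<and> wd z = wd u + wd w}" for n
  proof (induction n)
    case 0 thus ?case by (simp add: spt_dl wd0)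
  next
    case (Suc n)
    show ?case
    proof (intro allI impI subsetI)
      fix w :: "'b list" and z assume "length w = Suc n" and z: "z \<in> spt (tv_wstar m u w)"
      then obtain w' y where w: "w = w' @ [y]" and lw': "length w' = n"
        by (metis length_Suc_conv_rev)
      from z have "z \<in> spt (act (tv_wstar m u w') y) \<or> z \<in> spt (lext (tv_wstar m u) (tv_wl m w' y))"
        unfolding w wstar_snoc by (rule spt_diffD)
      thus "z \<in> {z. length z = length u \<and> wd z = wd u + wd w}"
      proof
        assume "z \<in> spt (act (tv_wstar m u w') y)"
        then obtain v where v: "v \<in> spt (tv_wstar m u w')" "z \<in> spt (tv_wl m v y)" by (blast dest: spt_actD)
        have "length z = length v" using v(2) spt_wl by blast
        moreover have "length v = length u" "wd v = wd u + wd w'" using v(1) Suc.IH lw' by auto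
        ultimately show ?thesis using wdl[OF v(2)] by (simp add: w wds)
      next
        assume "z \<in> spt (lext (tv_wstar m u) (tv_wl m w' y))"
        then obtain v where v: "v \<in> spt (tv_wl m w' y)" "z \<in> spt (tv_wstar m u v)" by (blast dest: spt_lextD)
        have "length v = n" using v(1) spt_wl lw' by blast
        hence "length z = length u" "wd z = wd u + wd v" using v(2) Suc.IH by auto
        thus ?thesis using wdl[OF v(1)] by (simp add: w wds)
      qed
    qed
  qed
  thus ?thesis by blast
qed

lemma spt_wstar_len: "spt (tv_wstar m u w) \<subseteq> {z. length z = length u}"
  using spt_wstar_gen[of "\<lambda>_. 0" u w] by auto

lemma wstar_at_nil: "tv_wstar m u w [] = (if u = [] \<and> w = [] then 1 else 0)"
proof (cases "u = []")
  case False
  hence "[] \<notin> spt (tv_wstar m u w)" using spt_wstar_len by fastforce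
  thus ?thesis using False by (simp add: spt_def)
next
  case True
  have "\<forall>w. length w = n \<longrightarrow> tv_wstar m [] w [] = (if w = [] then 1 else 0)" for n
  proof (induction n)
    case 0 thus ?case by (simp add: dl_def)
  next
    case (Suc n)
    show ?case
    proof (intro allI impI)
      fix w :: "'b list" assume "length w = Suc n"
      then obtain w' y where w: "w = w' @ [y]" and lw': "length w' = n"
        by (metis length_Suc_conv_rev)
      have sp: "spt (tv_wstar m [] w') \<subseteq> {[]}" using spt_wstar_len[of "[]" w'] by auto
      have a: "act (tv_wstar m [] w') y [] = 0"
      proof -
        have "act (tv_wstar m [] w') y [] = (\<Sum>v\<in>spt (tv_wstar m [] w'). tv_wstar m [] w' v * tv_wl m v y [])"
          by (simp add: act_def lext_def)
        also have "\<dots> = 0" using sp by (intro sum.neutral) auto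
        finally show ?thesis .
      qed
      have b: "lext (tv_wstar m []) (tv_wl m w' y) [] = 0"
      proof -
        have "lext (tv_wstar m []) (tv_wl m w' y) [] = (\<Sum>v\<in>spt (tv_wl m w' y). tv_wl m w' y v * tv_wstar m [] v [])"
          by (simp add: lext_def)
        also have "\<dots> = 0"
        proof (intro sum.neutral ballI)
          fix v assume v: "v \<in> spt (tv_wl m w' y)"
          hence lv: "length v = n" using spt_wl lw' by blast
          show "tv_wl m w' y v * tv_wstar m [] v [] = 0"
          proof (cases "v = []")
            case True
            hence "w' = []" using lv lw' by simp
            thus ?thesis using v by (simp add: spt_def)
          next
            case False thus ?thesis using Suc.IH lv by simp
          qed
        qed
        finally show ?thesis .
      qed
      show "tv_wstar m [] w [] = (if w = [] then 1 else 0)"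
        by (simp add: w wstar_snoc a b)
    qed
  qed
  thus ?thesis using True by auto
qed

theorem eps_star:
  fixes f g :: "'b list \<Rightarrow> 'k"
  assumes f: "fin f" and g: "fin g"
  shows "tv_eps (tv_star m f g) = tv_eps f * tv_eps g"
proof -
  have "tv_star m f g [] = (\<Sum>u\<in>spt f. f u * (\<Sum>w\<in>spt g. g w * tv_wstar m u w []))"
    by (simp add: star_eq f g lext_def)
  also have "\<dots> = (\<Sum>u\<in>spt f. f u * (if u = [] then g [] * 1 else 0))"
  proof (rule sum.cong[OF refl])
    fix u
    have "(\<Sum>w\<in>spt g. g w * tv_wstar m u w []) = (\<Sum>w\<in>spt g. g w * (if w = [] then (if u = [] then 1 else 0) else 0))"
      by (rule sum.cong) (auto simp: wstar_at_nil)
    also have "\<dots> = g [] * (if u = [] then 1 else 0)" by (rule sum_spt_delta[OF g])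
    finally show "f u * (\<Sum>w\<in>spt g. g w * tv_wstar m u w []) = f u * (if u = [] then g [] * 1 else 0)" by simp
  qed
  also have "\<dots> = f [] * (g [] * 1)" by (rule sum_spt_delta[OF f])
  finally show ?thesis by (simp add: tv_eps_def)
qed

end


context mag begin

definition mu :: "('b list \<Rightarrow> 'k) \<Rightarrow> ('b list \<Rightarrow> 'k) \<Rightarrow> ('b list \<times> 'b list \<Rightarrow> 'k) \<Rightarrow> 'b list \<Rightarrow> 'k" where
  "mu f g T = lext (\<lambda>(a, b). tv_mult (tv_star m f (dl a)) (tv_star m g (dl b))) T"
definition nu :: "('b list \<Rightarrow> 'k) \<Rightarrow> ('b list \<times> 'b list \<Rightarrow> 'k) \<Rightarrow> 'b list \<Rightarrow> 'k" where
  "nu g T = lext (\<lambda>(a, b). tv_mult (tv_star m g (dl a)) (dl b)) T"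

lemma mu_lin: "lin (\<lambda>T. mu f g T)" by (simp add: mu_def)
lemma nu_lin: "lin (\<lambda>T. nu g T)" by (simp add: nu_def)
lemma mu_dl[simp]: "mu f g (dl (a, b)) = tv_mult (tv_star m f (dl a)) (tv_star m g (dl b))" by (simp add: mu_def)
lemma nu_dl[simp]: "nu g (dl (a, b)) = tv_mult (tv_star m g (dl a)) (dl b)" by (simp add: nu_def)
lemma fin_mu[simp]: "fin f \<Longrightarrow> fin g \<Longrightarrow> fin T \<Longrightarrow> fin (mu f g T)" by (simp add: mu_def split_def)
lemma fin_nu[simp]: "fin g \<Longrightarrow> fin T \<Longrightarrow> fin (nu g T)" by (simp add: nu_def split_def)

lemma mu_tens:
  fixes P Q :: "'b list \<Rightarrow> 'k"
  assumes f: "fin f" and g: "fin g" and P: "fin P" and Q: "fin Q"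
  shows "mu f g (tens P Q) = tv_mult (tv_star m f P) (tv_star m g Q)"
proof (rule lin_eq2[where P = "\<lambda>P Q. mu f g (tens P Q)" and Q = "\<lambda>P Q. tv_mult (tv_star m f P) (tv_star m g Q)", OF _ _ _ _ _ P Q])
  fix Q :: "'b list \<Rightarrow> 'k" assume Q: "fin Q"
  show "lin (\<lambda>P. mu f g (tens P Q))" by (rule lin_comp[OF mu_lin tens_lin1[OF Q]]) (simp add: Q)
  show "lin (\<lambda>P. tv_mult (tv_star m f P) (tv_star m g Q))"
    by (rule lin_comp[OF mult_lin1 star_lin2[OF f]]) (simp_all add: f g Q)
next
  fix a
  show "lin (\<lambda>Q. mu f g (tens (dl a) Q))" by (rule lin_comp[OF mu_lin tens_lin2]) simp_all
  show "lin (\<lambda>Q. tv_mult (tv_star m f (dl a)) (tv_star m g Q))"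
    by (rule lin_comp[OF mult_lin2 star_lin2[OF g]]) (simp_all add: f g)
qed simp

lemma nu_tens:
  fixes P Q :: "'b list \<Rightarrow> 'k"
  assumes g: "fin g" and P: "fin P" and Q: "fin Q"
  shows "nu g (tens P Q) = tv_mult (tv_star m g P) Q"
proof (rule lin_eq2[where P = "\<lambda>P Q. nu g (tens P Q)" and Q = "\<lambda>P Q. tv_mult (tv_star m g P) Q", OF _ _ _ _ _ P Q])
  fix Q :: "'b list \<Rightarrow> 'k" assume Q: "fin Q"
  show "lin (\<lambda>P. nu g (tens P Q))" by (rule lin_comp[OF nu_lin tens_lin1[OF Q]]) (simp add: Q)
  show "lin (\<lambda>P. tv_mult (tv_star m g P) Q)"
    by (rule lin_comp[OF mult_lin1[OF Q] star_lin2[OF g]]) (simp_all add: g)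
next
  fix a
  show "lin (\<lambda>Q. nu g (tens (dl a) Q))" by (rule lin_comp[OF nu_lin tens_lin2]) simp_all
  show "lin (\<lambda>Q. tv_mult (tv_star m g (dl a)) Q)"
    by (rule mult_lin2) (simp add: g)
qed simp

lemma mu_add: "fin S \<Longrightarrow> fin T \<Longrightarrow> mu f g (S + T) = mu f g S + mu f g T"
  by (rule lin_addD[OF mu_lin])
lemma nu_add: "fin S \<Longrightarrow> fin T \<Longrightarrow> nu g (S + T) = nu g S + nu g T"
  by (rule lin_addD[OF nu_lin])

lemma LP1:
  assumes f: "fin f" and g: "fin g" and T: "fin T"
  shows "mu f g (tv_mult2 T (tv_cop_w [y])) = act (mu f g T) y - mu f g (act2 T y)"
proof (rule lin_eq[OF lin_comp[OF mu_lin mult2_lin1] _ T])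
  show "lin (\<lambda>T. act (mu f g T) y - mu f g (act2 T y))"
    by (rule lin_diff[OF lin_comp[OF act_lin mu_lin] lin_comp[OF mu_lin act2_lin]]) (simp_all add: f g)
next
  fix p :: "'b list \<times> 'b list"
  obtain a b where p: "p = (a, b)" by (cases p)
  let ?A = "tv_star m f (dl a)" and ?B = "tv_star m g (dl b)"
  have l: "mu f g (tv_mult2 (dl (a, b)) (tv_cop_w [y]))
      = tv_mult (act ?A y) ?B - tv_mult (tv_star m f (tv_wl m a y)) ?B
        + (tv_mult ?A (act ?B y) - tv_mult ?A (tv_star m g (tv_wl m b y)))"
    by (simp add: cop_w_single mult2_add2 mu_add star_snoc f g mult_diff1 mult_diff2 del: star_dl)
  have r: "act (mu f g (dl (a, b))) y - mu f g (act2 (dl (a, b)) y)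
      = tv_mult (act ?A y) ?B + tv_mult ?A (act ?B y)
        - (tv_mult (tv_star m f (tv_wl m a y)) ?B + tv_mult ?A (tv_star m g (tv_wl m b y)))"
    by (simp add: act_mult f g mu_add mu_tens star_unit del: star_dl)
  show "mu f g (tv_mult2 (dl p) (tv_cop_w [y])) = act (mu f g (dl p)) y - mu f g (act2 (dl p) y)"
    unfolding p l r by (simp add: algebra_simps)
qed (simp_all add: f g)

theorem star_mult:
  fixes f g h :: "'b list \<Rightarrow> 'k"
  assumes f: "fin f" and g: "fin g" and h: "fin h"
  shows "tv_star m (tv_mult f g) h = mu f g (tv_cop h)"
proof (rule len_ind[where LA = "\<lambda>h. tv_star m (tv_mult f g) h" and LB = "\<lambda>h. mu f g (tv_cop h)", OF _ _ _ _ h])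
  show "lin (\<lambda>h. tv_star m (tv_mult f g) h)" by (rule star_lin2) (simp add: f g)
  show "lin (\<lambda>h. mu f g (tv_cop h))" by (rule lin_comp[OF mu_lin cop_lin]) simp
  show "tv_star m (tv_mult f g) (dl []) = mu f g (tv_cop (dl []))"
    by (simp add: star_unit f g cop_w_dsum[of "[]"] del: star_dl)
next
  fix w :: "'b list" and y :: 'b
  assume IH: "\<And>h. fin h \<Longrightarrow> spt h \<subseteq> {v. length v = length w} \<Longrightarrow>
    tv_star m (tv_mult f g) h = mu f g (tv_cop h)"
  have i1: "tv_star m (tv_mult f g) (dl w) = mu f g (tv_cop_w w)"
    using IH[of "dl w"] by (simp add: spt_dl)
  have i2: "tv_star m (tv_mult f g) (tv_wl m w y) = mu f g (act2 (tv_cop_w w) y)"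
    using IH[of "tv_wl m w y"] spt_wl by (simp add: cop_act_w)
  have "tv_star m (tv_mult f g) (dl (w @ [y])) = act (mu f g (tv_cop_w w)) y - mu f g (act2 (tv_cop_w w) y)"
    by (simp only: star_snoc[OF fin_mult[OF f g]] i1 i2)
  also have "\<dots> = mu f g (tv_mult2 (tv_cop_w w) (tv_cop_w [y]))"
    by (simp add: LP1 f g)
  also have "\<dots> = mu f g (tv_cop (dl (w @ [y])))"
    by (simp add: cop_w_append)
  finally show "tv_star m (tv_mult f g) (dl (w @ [y])) = mu f g (tv_cop (dl (w @ [y])))" .
qed

lemma LP3:
  assumes g: "fin g" and T: "fin T"
  shows "nu g (tv_mult2 T (tv_cop_w [y])) = act (nu g T) y + tv_mult (nu g T) (dl [y]) - nu g (act2 T y)"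
proof (rule lin_eq[OF lin_comp[OF nu_lin mult2_lin1] _ T])
  show "lin (\<lambda>T. act (nu g T) y + tv_mult (nu g T) (dl [y]) - nu g (act2 T y))"
    by (rule lin_diff[OF lin_add[OF lin_comp[OF act_lin nu_lin] lin_comp[OF mult_lin1 nu_lin]] lin_comp[OF nu_lin act2_lin]])
       (simp_all add: g)
next
  fix p :: "'b list \<times> 'b list"
  obtain a b where p: "p = (a, b)" by (cases p)
  let ?A = "tv_star m g (dl a)"
  have l: "nu g (tv_mult2 (dl (a, b)) (tv_cop_w [y]))
      = tv_mult (act ?A y) (dl b) - tv_mult (tv_star m g (tv_wl m a y)) (dl b)
        + tv_mult (tv_mult ?A (dl b)) (dl [y])"
    by (simp add: cop_w_single mult2_add2 nu_add star_snoc g mult_diff1 mult_assoc del: star_dl)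
  have r: "act (nu g (dl (a, b))) y + tv_mult (nu g (dl (a, b))) (dl [y]) - nu g (act2 (dl (a, b)) y)
      = tv_mult (act ?A y) (dl b) + tv_mult ?A (tv_wl m b y) + tv_mult (tv_mult ?A (dl b)) (dl [y])
        - (tv_mult (tv_star m g (tv_wl m a y)) (dl b) + tv_mult ?A (tv_wl m b y))"
    by (simp add: act_mult g nu_add nu_tens star_unit del: star_dl)
  show "nu g (tv_mult2 (dl p) (tv_cop_w [y])) = act (nu g (dl p)) y + tv_mult (nu g (dl p)) (dl [y]) - nu g (act2 (dl p) y)"
    unfolding p l r by (simp add: algebra_simps)
qed (simp_all add: g)

lemma star_add2: "fin f \<Longrightarrow> fin g \<Longrightarrow> fin g' \<Longrightarrow> tv_star m f (g + g') = tv_star m f g + tv_star m f g'"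
  by (rule lin_addD[OF star_lin2])
lemma star_diff2: "fin f \<Longrightarrow> fin g \<Longrightarrow> fin g' \<Longrightarrow> tv_star m f (g - g') = tv_star m f g - tv_star m f g'"
  by (rule lin_diffD[OF star_lin2])

theorem star_star:
  fixes f g h :: "'b list \<Rightarrow> 'k"
  assumes f: "fin f" and g: "fin g" and h: "fin h"
  shows "tv_star m (tv_star m f g) h = tv_star m f (nu g (tv_cop h))"
proof (rule len_ind[where LA = "\<lambda>h. tv_star m (tv_star m f g) h" and LB = "\<lambda>h. tv_star m f (nu g (tv_cop h))", OF _ _ _ _ h])
  show "lin (\<lambda>h. tv_star m (tv_star m f g) h)" by (rule star_lin2) (simp add: f g)
  show "lin (\<lambda>h. tv_star m f (nu g (tv_cop h)))"
    by (rule lin_comp[OF star_lin2[OF f] lin_comp[OF nu_lin cop_lin]]) (simp_all add: g)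
  show "tv_star m (tv_star m f g) (dl []) = tv_star m f (nu g (tv_cop (dl [])))"
    by (simp add: star_unit f g cop_w_dsum[of "[]"] mult_unit_right[unfolded tv_unit_def] del: star_dl)
next
  fix w :: "'b list" and y :: 'b
  assume IH: "\<And>h. fin h \<Longrightarrow> spt h \<subseteq> {v. length v = length w} \<Longrightarrow>
    tv_star m (tv_star m f g) h = tv_star m f (nu g (tv_cop h))"
  let ?X = "nu g (tv_cop_w w)"
  have fX: "fin ?X" by (simp add: g)
  have i1: "tv_star m (tv_star m f g) (dl w) = tv_star m f ?X"
    using IH[of "dl w"] by (simp add: spt_dl)
  have i2: "tv_star m (tv_star m f g) (tv_wl m w y) = tv_star m f (nu g (act2 (tv_cop_w w) y))"
    using IH[of "tv_wl m w y"] spt_wl by (simp add: cop_act_w)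
  have "tv_star m (tv_star m f g) (dl (w @ [y])) = act (tv_star m f ?X) y - tv_star m f (nu g (act2 (tv_cop_w w) y))"
    by (simp only: star_snoc[OF fin_star[OF f g]] i1 i2)
  also have "\<dots> = tv_star m f (act ?X y) + (act (tv_star m f ?X) y - tv_star m f (act ?X y))
      - tv_star m f (nu g (act2 (tv_cop_w w) y))"
    by (simp add: algebra_simps)
  also have "\<dots> = tv_star m f (act ?X y) + tv_star m f (tv_mult ?X (dl [y]))
      - tv_star m f (nu g (act2 (tv_cop_w w) y))"
    by (simp add: star_mult_letter f fX)
  also have "\<dots> = tv_star m f (act ?X y + tv_mult ?X (dl [y]) - nu g (act2 (tv_cop_w w) y))"
    by (simp add: star_add2 star_diff2 f g fX)
  also have "\<dots> = tv_star m f (nu g (tv_mult2 (tv_cop_w w) (tv_cop_w [y])))"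
    by (simp add: LP3 g)
  also have "\<dots> = tv_star m f (nu g (tv_cop (dl (w @ [y]))))"
    by (simp add: cop_w_append)
  finally show "tv_star m (tv_star m f g) (dl (w @ [y])) = tv_star m f (nu g (tv_cop (dl (w @ [y]))))" .
qed

end


lemma card_compl_less: "S \<subseteq> {..<n} \<Longrightarrow> x \<in> S \<Longrightarrow> card {i. i < n \<and> i \<notin> S} < n"
proof -
  assume a: "S \<subseteq> {..<n}" "x \<in> S"
  have "{i. i < n \<and> i \<notin> S} \<subset> {..<n}" using a by auto
  hence "card {i. i < n \<and> i \<notin> S} < card {..<n}" by (intro psubset_card_mono) auto
  thus ?thesis by simp
qed

lemma card_sub_less: "S \<subseteq> {..<n} \<Longrightarrow> S \<noteq> {..<n} \<Longrightarrow> card {i. i < n \<and> i \<in> S} < n"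
proof -
  assume a: "S \<subseteq> {..<n}" "S \<noteq> {..<n}"
  have "{i. i < n \<and> i \<in> S} = S" using a(1) by auto
  moreover have "card S < card {..<n}" using a by (intro psubset_card_mono) auto
  ultimately show ?thesis by simp
qed

context mag begin

definition ee :: "'b list \<Rightarrow> ('b list \<Rightarrow> 'k) \<Rightarrow> 'b list \<Rightarrow> 'k" where
  "ee w y = (if w = [] then y else 0)"

function bR :: "'b list \<Rightarrow> ('b list \<Rightarrow> 'k) \<Rightarrow> 'b list \<Rightarrow> 'k" where
  "bR w y = ee w y - (\<Sum>S\<in>Pow {..<length w} - {{}}.
      tv_star m (bR (nths w ({..<length w} - S)) y) (dl (nths w S)))"
  by auto
termination
  by (relation "measure (\<lambda>(w, y). length w)") (auto simp: length_nths card_compl_less)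

function bL :: "'b list \<Rightarrow> ('b list \<Rightarrow> 'k) \<Rightarrow> 'b list \<Rightarrow> 'k" where
  "bL w y = ee w y - (\<Sum>S\<in>Pow {..<length w} - {{..<length w}}.
      bL (nths w S) (tv_star m y (dl (nths w ({..<length w} - S)))))"
  by auto
termination
  by (relation "measure (\<lambda>(w, y). length w)") (auto simp: length_nths card_sub_less)

declare bR.simps[simp del] bL.simps[simp del]

lemma ee_lin: "lin (\<lambda>y. ee w y)"
proof (cases "w = []")
  case True thus ?thesis by (simp add: ee_def lin_id)
next
  case False thus ?thesis using lin_zero by (simp add: ee_def)
qed
lemma fin_ee[simp]: "fin y \<Longrightarrow> fin (ee w y)"
  by (simp add: ee_def)

lemma bR_props: "lin (bR w) \<and> (\<forall>y. fin y \<longrightarrow> fin (bR w y))"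
proof (induction w rule: length_induct)
  case (1 w)
  let ?n = "length w"
  have IH: "lin (bR (nths w ({..<?n} - S))) \<and> (\<forall>y. fin y \<longrightarrow> fin (bR (nths w ({..<?n} - S)) y))"
    if "S \<in> Pow {..<?n} - {{}}" for S
    using 1 that by (auto simp: length_nths card_compl_less)
  have e: "bR w = (\<lambda>y. ee w y - (\<Sum>S\<in>Pow {..<?n} - {{}}. tv_star m (bR (nths w ({..<?n} - S)) y) (dl (nths w S))))"
    by (rule ext) (rule bR.simps)
  show ?case
  proof
    show "lin (bR w)"
      unfolding e
    proof (rule lin_diff[OF ee_lin lin_sum])
      fix S assume S: "S \<in> Pow {..<?n} - {{}}"
      show "lin (\<lambda>y. tv_star m (bR (nths w ({..<?n} - S)) y) (dl (nths w S)))"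
        by (rule lin_comp[OF star_lin1[OF fin_dl]]) (use IH[OF S] in auto)
    qed
    show "\<forall>y. fin y \<longrightarrow> fin (bR w y)"
      using IH by (subst bR.simps) (auto intro!: fin_diff fin_sum fin_star)
  qed
qed

lemma bR_lin: "lin (bR w)" using bR_props by blast
lemma fin_bR[simp]: "fin y \<Longrightarrow> fin (bR w y)" using bR_props by blast

lemma bL_props: "lin (bL w) \<and> (\<forall>y. fin y \<longrightarrow> fin (bL w y))"
proof (induction w rule: length_induct)
  case (1 w)
  let ?n = "length w"
  have IH: "lin (bL (nths w S)) \<and> (\<forall>y. fin y \<longrightarrow> fin (bL (nths w S) y))"
    if "S \<in> Pow {..<?n} - {{..<?n}}" for S
    using 1 that by (auto simp: length_nths card_sub_less)
  have e: "bL w = (\<lambda>y. ee w y - (\<Sum>S\<in>Pow {..<?n} - {{..<?n}}. bL (nths w S) (tv_star m y (dl (nths w ({..<?n} - S))))))"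
    by (rule ext) (rule bL.simps)
  show ?case
  proof
    show "lin (bL w)"
      unfolding e
    proof (rule lin_diff[OF ee_lin lin_sum])
      fix S assume S: "S \<in> Pow {..<?n} - {{..<?n}}"
      show "lin (\<lambda>y. bL (nths w S) (tv_star m y (dl (nths w ({..<?n} - S)))))"
        by (rule lin_comp[OF _ star_lin1[OF fin_dl]]) (use IH[OF S] in auto)
    qed
    show "\<forall>y. fin y \<longrightarrow> fin (bL w y)"
    proof (intro allI impI)
      fix y :: "'b list \<Rightarrow> 'k" assume y: "fin y"
      show "fin (bL w y)"
      proof (subst bL.simps, rule fin_diff)
        show "fin (ee w y)" using y by simp
        show "fin (\<Sum>S\<in>Pow {..<?n} - {{..<?n}}. bL (nths w S) (tv_star m y (dl (nths w ({..<?n} - S)))))"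
        proof (rule fin_sum)
          fix S assume S: "S \<in> Pow {..<?n} - {{..<?n}}"
          show "fin (bL (nths w S) (tv_star m y (dl (nths w ({..<?n} - S)))))"
            using IH[OF S] y by simp
        qed
      qed
    qed
  qed
qed

lemma bL_lin: "lin (bL w)" using bL_props by blast
lemma fin_bL[simp]: "fin y \<Longrightarrow> fin (bL w y)" using bL_props by blast

definition conv :: "('b list \<Rightarrow> ('b list \<Rightarrow> 'k) \<Rightarrow> 'b list \<Rightarrow> 'k) \<Rightarrow> ('b list \<Rightarrow> ('b list \<Rightarrow> 'k) \<Rightarrow> 'b list \<Rightarrow> 'k)
    \<Rightarrow> 'b list \<Rightarrow> ('b list \<Rightarrow> 'k) \<Rightarrow> 'b list \<Rightarrow> 'k" where
  "conv F G w y = dsum (\<lambda>a b. F a (G b y)) w"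

definition gam :: "'b list \<Rightarrow> ('b list \<Rightarrow> 'k) \<Rightarrow> 'b list \<Rightarrow> 'k" where
  "gam a y = tv_star m y (dl a)"

lemma dsum_split_empty:
  "dsum G w = G [] w + (\<Sum>S\<in>Pow {..<length w} - {{}}. G (nths w S) (nths w ({..<length w} - S)))"
proof -
  have "dsum G w = (\<Sum>S\<in>insert {} (Pow {..<length w} - {{}}). G (nths w S) (nths w ({..<length w} - S)))"
    unfolding dsum_def by (rule sum.cong) auto
  also have "\<dots> = G [] w + (\<Sum>S\<in>Pow {..<length w} - {{}}. G (nths w S) (nths w ({..<length w} - S)))"
    by (subst sum.insert) (auto simp: nths_all)
  finally show ?thesis .
qed

lemma dsum_split_full:
  "dsum G w = G w [] + (\<Sum>S\<in>Pow {..<length w} - {{..<length w}}. G (nths w S) (nths w ({..<length w} - S)))"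
proof -
  have "dsum G w = (\<Sum>S\<in>insert {..<length w} (Pow {..<length w} - {{..<length w}}). G (nths w S) (nths w ({..<length w} - S)))"
    unfolding dsum_def by (rule sum.cong) auto
  also have "\<dots> = G w [] + (\<Sum>S\<in>Pow {..<length w} - {{..<length w}}. G (nths w S) (nths w ({..<length w} - S)))"
    by (subst sum.insert) (auto simp: nths_all)
  finally show ?thesis .
qed

lemma conv_gam_bR: "fin y \<Longrightarrow> conv gam bR w y = ee w y"
proof -
  assume y: "fin y"
  have "conv gam bR w y = bR w y + (\<Sum>S\<in>Pow {..<length w} - {{}}.
      tv_star m (bR (nths w ({..<length w} - S)) y) (dl (nths w S)))"
    unfolding conv_def gam_def by (subst dsum_split_empty) (simp add: star_unit y)
  also have "\<dots> = ee w y" using bR.simps[of w y] by simp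
  finally show ?thesis .
qed

lemma conv_bL_gam: "fin y \<Longrightarrow> conv bL gam w y = ee w y"
proof -
  assume y: "fin y"
  have "conv bL gam w y = bL w y + (\<Sum>S\<in>Pow {..<length w} - {{..<length w}}.
      bL (nths w S) (tv_star m y (dl (nths w ({..<length w} - S)))))"
    unfolding conv_def gam_def by (subst dsum_split_full) (simp add: star_unit y)
  also have "\<dots> = ee w y" using bL.simps[of w y] by simp
  finally show ?thesis .
qed

lemma conv_assoc:
  assumes F: "\<And>a. lin (F a)" and G: "\<And>a z. fin z \<Longrightarrow> fin (G a z)" and H: "\<And>a z. fin z \<Longrightarrow> fin (H a z)"
    and y: "fin y"
  shows "conv (conv F G) H w y = conv F (conv G H) w y"
proof -
  have "conv F (conv G H) w y = dsum (\<lambda>a b. F a (dsum (\<lambda>c d. G c (H d y)) b)) w"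
    by (simp add: conv_def)
  also have "\<dots> = dsum (\<lambda>a b. dsum (\<lambda>c d. F a (G c (H d y))) b) w"
    by (rule dsum_cong) (rule lin_dsum[OF F], simp add: G H y)
  also have "\<dots> = dsum (\<lambda>a b. dsum (\<lambda>c d. F c (G d (H b y))) a) w"
    by (rule dsum_coassoc[symmetric])
  also have "\<dots> = conv (conv F G) H w y" by (simp add: conv_def)
  finally show ?thesis by simp
qed

lemma conv_ee_left: "conv ee F w y = F w y"
  unfolding conv_def ee_def by (rule dsum_counit1)

lemma conv_ee_right: "(\<And>a. lin (F a)) \<Longrightarrow> conv F ee w y = F w y"
proof -
  assume F: "\<And>a. lin (F a)"
  have "conv F ee w y = dsum (\<lambda>a b. if b = [] then F a y else 0) w"
    unfolding conv_def ee_def by (rule dsum_cong) (simp add: lin_zeroD[OF F])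
  thus ?thesis by (simp add: dsum_counit2)
qed

lemma bL_eq_bR: "fin y \<Longrightarrow> bL w y = bR w y"
proof -
  assume y: "fin y"
  have "bL w y = conv bL ee w y" by (simp add: conv_ee_right bL_lin)
  also have "\<dots> = conv bL (conv gam bR) w y"
    unfolding conv_def[of bL] by (rule dsum_cong) (simp add: conv_gam_bR y)
  also have "\<dots> = conv (conv bL gam) bR w y"
    by (rule conv_assoc[symmetric]) (simp_all add: bL_lin gam_def y)
  also have "\<dots> = conv ee bR w y"
    unfolding conv_def[of "conv bL gam"] conv_def[of ee] by (rule dsum_cong) (simp add: conv_bL_gam y)
  also have "\<dots> = bR w y" by (rule conv_ee_left)
  finally show ?thesis .
qed

end


context mag begin

theorem post_hopf: "tv_right_post_hopf m"
  unfolding tv_right_post_hopf_def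
proof (intro conjI allI impI)
  show "tv_hopf TYPE('b) TYPE('k)" by (rule hopf)
next
  fix f g :: "'b list \<Rightarrow> 'k" assume fg: "fin f \<and> fin g"
  thus "fin (tv_star m f g)" by simp
  show "tv_cop (tv_star m f g) = tv_star2 m (tv_cop f) (tv_cop g)" using fg by (simp add: cop_star)
  show "tv_eps (tv_star m f g) = tv_eps f * tv_eps g" using fg by (simp add: eps_star)
next
  fix f g h :: "'b list \<Rightarrow> 'k" assume fgh: "fin f \<and> fin g \<and> fin h"
  thus "tv_star m (tv_mult f g) h
        = lext (\<lambda>(a, b). tv_mult (tv_star m f (dl a)) (tv_star m g (dl b))) (tv_cop h)"
    using star_mult[of f g h] by (simp add: mu_def)
  show "tv_star m (tv_star m f g) h
        = tv_star m f (lext (\<lambda>(a, b). tv_mult (tv_star m g (dl a)) (dl b)) (tv_cop h))"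
    using star_star[of f g h] fgh by (simp add: nu_def)
next
  show "\<exists>bt :: 'b list \<Rightarrow> 'b list \<Rightarrow> 'b list \<Rightarrow> 'k. (\<forall>w v. fin (bt w v)) \<and>
        (\<forall>x y. fin x \<and> fin y \<longrightarrow>
          lext (\<lambda>(a, b). tv_star m (lext (bt b) y) (dl a)) (tv_cop x) = (\<lambda>z. tv_eps x * y z) \<and>
          lext (\<lambda>(a, b). lext (bt a) (tv_star m y (dl b))) (tv_cop x) = (\<lambda>z. tv_eps x * y z))"
  proof (intro exI[of _ "\<lambda>w v. bR w (dl v)"] conjI allI impI)
    fix w v show "fin (bR w (dl v))" by simp
  next
    fix x y :: "'b list \<Rightarrow> 'k" assume xy: "fin x \<and> fin y"
    hence x: "fin x" and y: "fin y" by auto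
    have lb: "lext (\<lambda>v. bR b (dl v)) z = bR b z" if "fin z" for b z
      by (rule linD[OF bR_lin that, symmetric])
    have "lext (\<lambda>(a, b). tv_star m (lext (\<lambda>v. bR b (dl v)) y) (dl a)) (tv_cop x)
        = lext (\<lambda>w. conv gam bR w y) x"
      by (simp add: lext_cop x lb y conv_def gam_def)
    also have "\<dots> = lext (\<lambda>w. if w = [] then y else 0) x"
      by (simp add: conv_gam_bR y ee_def)
    also have "\<dots> = (\<lambda>z. tv_eps x * y z)" by (simp add: lext_at_nil x tv_eps_def sc_def)
    finally show "lext (\<lambda>(a, b). tv_star m (lext (\<lambda>v. bR b (dl v)) y) (dl a)) (tv_cop x) = (\<lambda>z. tv_eps x * y z)" .
    have "lext (\<lambda>(a, b). lext (\<lambda>v. bR a (dl v)) (tv_star m y (dl b))) (tv_cop x)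
        = lext (\<lambda>w. conv bL gam w y) x"
      by (simp add: lext_cop x lb y conv_def gam_def bL_eq_bR)
    also have "\<dots> = lext (\<lambda>w. if w = [] then y else 0) x"
      by (simp add: conv_bL_gam y ee_def)
    also have "\<dots> = (\<lambda>z. tv_eps x * y z)" by (simp add: lext_at_nil x tv_eps_def sc_def)
    finally show "lext (\<lambda>(a, b). lext (\<lambda>v. bR a (dl v)) (tv_star m y (dl b))) (tv_cop x) = (\<lambda>z. tv_eps x * y z)" .
  qed
qed

end


lemma wdeg_append[simp]: "wdeg deg (u @ v) = wdeg deg u + wdeg deg v"
  by (simp add: wdeg_def)
lemma wdeg_nil[simp]: "wdeg deg [] = 0"
  by (simp add: wdeg_def)
lemma wdeg_cons[simp]: "wdeg deg (x # v) = deg x + wdeg deg v"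
  by (simp add: wdeg_def)

lemma wdeg_nths: "wdeg deg (nths w S) + wdeg deg (nths w ({..<length w} - S)) = wdeg deg w"
proof (induction w arbitrary: S rule: rev_induct)
  case Nil thus ?case by simp
next
  case (snoc x w)
  have "nths w ({..<length (w @ [x])} - S) = nths w ({..<length w} - S)" by (rule nths_cong) auto
  thus ?case using snoc.IH[of S] by (auto simp: nths_snoc)
qed

lemma length_le_wdeg: "\<forall>b. deg b \<noteq> 0 \<Longrightarrow> length w \<le> wdeg deg w"
proof (induction w)
  case Nil thus ?case by simp
next
  case (Cons a w)
  have "deg a \<noteq> 0" using Cons.prems by blast
  moreover have "length w \<le> wdeg deg w" using Cons by blast
  moreover have "length (a # w) = Suc (length w)" "wdeg deg (a # w) = deg a + wdeg deg w" by simp_all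
  ultimately show ?case by linarith
qed

lemma deg_le_wdeg: "b \<in> set w \<Longrightarrow> deg b \<le> wdeg deg w"
  by (induction w) auto

lemma finite_wdeg:
  fixes deg :: "'b \<Rightarrow> nat"
  assumes fd: "\<forall>n. finite {b. deg b = n}" and v0: "\<forall>b. deg b \<noteq> 0"
  shows "finite {w. wdeg deg w = n}"
proof -
  have fA: "finite {b. deg b \<le> n}"
  proof -
    have "{b. deg b \<le> n} = (\<Union>k\<le>n. {b. deg b = k})" by auto
    thus ?thesis using fd by simp
  qed
  have "{w. wdeg deg w = n} \<subseteq> {w. set w \<subseteq> {b. deg b \<le> n} \<and> length w \<le> n}"
  proof
    fix w :: "'b list" assume "w \<in> {w. wdeg deg w = n}"
    hence wn: "wdeg deg w = n" by simp
    show "w \<in> {w. set w \<subseteq> {b. deg b \<le> n} \<and> length w \<le> n}"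
      using deg_le_wdeg[of _ w deg] length_le_wdeg[OF v0, of w] wn by auto
  qed
  moreover have "finite {w. set w \<subseteq> {b. deg b \<le> n} \<and> length w \<le> n}"
    by (rule finite_lists_length_le[OF fA])
  ultimately show ?thesis by (rule finite_subset)
qed

lemma wdeg_zero: "\<forall>b. deg b \<noteq> 0 \<Longrightarrow> wdeg deg w = 0 \<Longrightarrow> w = []"
proof (cases w)
  case (Cons a v)
  assume V: "\<forall>b. deg b \<noteq> 0" and W: "wdeg deg w = 0"
  have "deg a \<noteq> 0" using V by blast
  moreover have "deg a + wdeg deg v = 0" using W Cons by simp
  ultimately show ?thesis by simp
qed simp

lemma spt_multD:
  fixes f g :: "'b list \<Rightarrow> 'k::field"
  shows "fin f \<Longrightarrow> fin g \<Longrightarrow> z \<in> spt (tv_mult f g) \<Longrightarrow> \<exists>u\<in>spt f. \<exists>v\<in>spt g. z = u @ v"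
proof -
  assume f: "fin f" and g: "fin g" and z: "z \<in> spt (tv_mult f g)"
  have "tv_mult f g = lext (\<lambda>u. lext (\<lambda>v. dl (u @ v)) g) f" by (simp add: tv_mult_def bil_eq f g)
  with z obtain u where u: "u \<in> spt f" "z \<in> spt (lext (\<lambda>v. dl (u @ v)) g)" by (auto dest: spt_lextD)
  then obtain v where v: "v \<in> spt g" "z \<in> spt (dl (u @ v) :: _ \<Rightarrow> 'k)" by (auto dest: spt_lextD)
  thus ?thesis using u by (auto simp: spt_dl)
qed

context mag begin

lemma spt_starD: "fin f \<Longrightarrow> fin g \<Longrightarrow> z \<in> spt (tv_star m f g) \<Longrightarrow> \<exists>u\<in>spt f. \<exists>w\<in>spt g. z \<in> spt (tv_wstar m u w)"
proof -
  assume f: "fin f" and g: "fin g" and z: "z \<in> spt (tv_star m f g)"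
  with star_eq[OF f g] obtain u where u: "u \<in> spt f" "z \<in> spt (lext (\<lambda>w. tv_wstar m u w) g)"
    by (auto dest: spt_lextD)
  then obtain w where "w \<in> spt g" "z \<in> spt (tv_wstar m u w)" by (auto dest: spt_lextD)
  thus ?thesis using u by auto
qed

lemma wdeg_wl:
  assumes gp: "\<forall>x y z. m x y z \<noteq> 0 \<longrightarrow> deg z = deg x + deg y"
    and z: "z \<in> spt (tv_wl m v y)"
  shows "wdeg deg z = wdeg deg v + deg y"
proof -
  from z have "(\<Sum>i<length v. if length z = length v \<and> take i z = take i v \<and> drop (Suc i) z = drop (Suc i) v
      then m (v ! i) y (z ! i) else 0) \<noteq> 0" by (simp add: spt_def tv_wl_def)
  then obtain i where i: "i < length v" "length z = length v" "take i z = take i v" "drop (Suc i) z = drop (Suc i) v"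
      "m (v ! i) y (z ! i) \<noteq> 0"
    using sum.neutral[of "{..<length v}"] by (smt (verit, best) lessThan_iff)
  have dz: "deg (z ! i) = deg (v ! i) + deg y" using gp i(5) by blast
  have "z = take i z @ z ! i # drop (Suc i) z" by (rule id_take_nth_drop) (simp add: i)
  hence "wdeg deg z = wdeg deg (take i v) + deg (z ! i) + wdeg deg (drop (Suc i) v)"
    using i by (metis add.assoc wdeg_append wdeg_cons)
  moreover have "v = take i v @ v ! i # drop (Suc i) v" by (rule id_take_nth_drop) (simp add: i)
  hence "wdeg deg v = wdeg deg (take i v) + deg (v ! i) + wdeg deg (drop (Suc i) v)"
    by (metis add.assoc wdeg_append wdeg_cons)
  ultimately show ?thesis using dz by simp
qed

lemma spt_wstar_deg:
  assumes gp: "\<forall>x y z. m x y z \<noteq> 0 \<longrightarrow> deg z = deg x + deg y"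
  shows "z \<in> spt (tv_wstar m u w) \<Longrightarrow> wdeg deg z = wdeg deg u + wdeg deg w"
  using spt_wstar_gen[of "wdeg deg" u w] wdeg_wl[OF gp] by auto

end

theorem proposition4p1:
  fixes deg :: "'b \<Rightarrow> nat" and m :: "'b \<Rightarrow> 'b \<Rightarrow> 'b \<Rightarrow> 'k::field"
  assumes fin_dim: "\<forall>n. finite {b. deg b = n}"
    and V0_zero: "\<forall>b. deg b \<noteq> 0"
    and graded_prod: "\<forall>x y z. m x y z \<noteq> 0 \<longrightarrow> deg z = deg x + deg y"
  shows "tv_right_post_hopf m \<and> tv_cocommutative TYPE('b) TYPE('k) \<and> tv_connected_graded deg m"
proof -
  have mf: "fin (m x y)" for x y
  proof -
    have "spt (m x y) \<subseteq> {z. deg z = deg x + deg y}" using graded_prod by (auto simp: spt_def)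
    thus ?thesis using fin_dim by (auto simp: fin_def intro: finite_subset)
  qed
  interpret mag m by unfold_locales (rule mf)
  have graded: "tv_connected_graded deg m"
    unfolding tv_connected_graded_def
  proof (intro conjI allI impI)
    fix n show "finite {w. wdeg deg w = n}" by (rule finite_wdeg[OF fin_dim V0_zero])
  next
    fix f g :: "'b list \<Rightarrow> 'k" and n k
    assume a: "f \<in> tv_grade deg n \<and> g \<in> tv_grade deg k"
    hence f: "fin f" and g: "fin g" and df: "\<And>w. f w \<noteq> 0 \<Longrightarrow> wdeg deg w = n"
      and dg: "\<And>w. g w \<noteq> 0 \<Longrightarrow> wdeg deg w = k" by (auto simp: tv_grade_def)
    show "tv_mult f g \<in> tv_grade deg (n + k)"
      unfolding tv_grade_def
    proof (intro CollectI conjI allI impI)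
      show "fin (tv_mult f g)" using f g by simp
      fix w assume "tv_mult f g w \<noteq> 0"
      hence "w \<in> spt (tv_mult f g)" by (simp add: spt_def)
      then obtain u v where "u \<in> spt f" "v \<in> spt g" "w = u @ v" using spt_multD[OF f g] by blast
      thus "wdeg deg w = n + k" using df dg by (simp add: spt_def)
    qed
    show "tv_star m f g \<in> tv_grade deg (n + k)"
      unfolding tv_grade_def
    proof (intro CollectI conjI allI impI)
      show "fin (tv_star m f g)" using f g by simp
      fix w assume "tv_star m f g w \<noteq> 0"
      hence "w \<in> spt (tv_star m f g)" by (simp add: spt_def)
      then obtain u v where "u \<in> spt f" "v \<in> spt g" "w \<in> spt (tv_wstar m u v)" using spt_starD[OF f g] by blast
      thus "wdeg deg w = n + k" using df dg spt_wstar_deg[OF graded_prod] by (simp add: spt_def)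
    qed
  next
    show "(tv_unit :: 'b list \<Rightarrow> 'k) \<in> tv_grade deg 0"
      by (auto simp: tv_grade_def tv_unit_def) (auto simp: dl_def split: if_splits)
  next
    fix f :: "'b list \<Rightarrow> 'k" and n
    assume a: "f \<in> tv_grade deg n"
    hence f: "fin f" and df: "\<And>w. f w \<noteq> 0 \<Longrightarrow> wdeg deg w = n" by (auto simp: tv_grade_def)
    {
      fix u v assume "tv_cop f (u, v) \<noteq> 0"
      hence "(\<Sum>w\<in>spt f. f w * tv_cop_w w (u, v)) \<noteq> 0" by (simp add: tv_cop_def lext_def)
      then obtain w where w: "w \<in> spt f" "f w * tv_cop_w w (u, v) \<noteq> (0::'k)"
        using sum.neutral[of "spt f" "\<lambda>w. f w * tv_cop_w w (u, v)"] by blast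
      hence "(u, v) \<in> spt (tv_cop_w w :: _ \<Rightarrow> 'k)" by (simp add: spt_def)
      then obtain S where "u = nths w S" "v = nths w ({..<length w} - S)" using spt_cop_w by blast
      hence "wdeg deg u + wdeg deg v = wdeg deg w" by (simp add: wdeg_nths)
      thus "wdeg deg u + wdeg deg v = n" using df w by (simp add: spt_def)
    }
  next
    fix f :: "'b list \<Rightarrow> 'k" and n
    assume a: "f \<in> tv_grade deg n" "n \<noteq> 0"
    hence df: "\<And>w. f w \<noteq> 0 \<Longrightarrow> wdeg deg w = n" by (auto simp: tv_grade_def)
    show "tv_eps f = 0"
      using df[of "[]"] a(2) by (auto simp: tv_eps_def)
  next
    fix f :: "'b list \<Rightarrow> 'k" assume "f \<in> tv_grade deg 0"
    hence df: "\<And>w. f w \<noteq> 0 \<Longrightarrow> wdeg deg w = 0" by (auto simp: tv_grade_def)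
    show "f = (\<lambda>x. f [] * tv_unit x)"
    proof (rule ext)
      fix x show "f x = f [] * tv_unit x"
      proof (cases "x = []")
        case True thus ?thesis by (simp add: tv_unit_def dl_def)
      next
        case False
        hence "f x = 0" using df wdeg_zero[OF V0_zero] by blast
        thus ?thesis using False by (simp add: tv_unit_def dl_def)
      qed
    qed
  qed
  show ?thesis using post_hopf cocomm graded by blast
qed


end
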